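(* Let $\gamma>0$ and $\mathbb{H}_{\gamma}=\{(z_1,z_2)\in\mathbb{C}^2:|z_1|^{\gamma}<|z_2|<1\}$. If $(\beta_1,\beta_2)\in\mathbb{Z}^2$ is such that both $(\beta_1,\beta_2)$ and $(\beta_1,-\beta_2)$ belong to $\mathcal{A}^2_\gamma$, then there exists a constant $C$ such that $$\mathbf{B}_\gamma\left(z_1^{\beta_1}\bar z_2^{\,\beta_2}\right)=C\,z_1^{\beta_1}z_2^{-\beta_2}.$$
   Context: $\mathcal{A}^2_\gamma$ is the set of $\alpha=(\alpha_1,\alpha_2)\in\mathbb{Z}^2$ with $\alpha_1\ge0$ such that $z_1^{\alpha_1}z_2^{\alpha_2}$ is square integrable (w.r.t. Lebesgue measure) on $\mathbb{H}_\gamma$; equivalently $\alpha_1\ge0$ and $\alpha_1+\gamma(\alpha_2+1)>-1$. $\mathbf{B}_\gamma$ is the Bergman projection of $\mathbb{H}_\gamma$, i.e. the orthogonal projection of $L^2(\mathbb{H}_\gamma)$ onto the holomorphic square integrable functions. *)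

theory Defs
  imports "HOL-Analysis.Analysis"
begin

definition Hdom :: "real \<Rightarrow> (complex \<times> complex) set" where
  "Hdom \<gamma> = {z. cmod (fst z) powr \<gamma> < cmod (snd z) \<and> cmod (snd z) < 1}"

text \<open>Holomorphy on an open subset of C^2: complex (Frechet) differentiability, i.e.
  real differentiability with a complex-linear derivative.\<close>
definition holo2 :: "(complex \<times> complex \<Rightarrow> complex) \<Rightarrow> (complex \<times> complex) set \<Rightarrow> bool" where
  "holo2 f S \<longleftrightarrow> (\<forall>z\<in>S. \<exists>L. (f has_derivative L) (at z) \<and>
      (\<forall>c w. L (c * fst w, c * snd w) = c * L w))"

definition sq_int :: "(complex \<times> complex \<Rightarrow> complex) \<Rightarrow> (complex \<times> complex) set \<Rightarrow> bool" where
  "sq_int f S \<longleftrightarrow> set_borel_measurable lborel S f \<and>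
      set_integrable lborel S (\<lambda>z. (cmod (f z))\<^sup>2)"

text \<open>Bergman space of H_gamma; functions are normalised to vanish off the domain so that
  elements are genuine functions (holomorphic functions agreeing a.e. agree on the domain).\<close>
definition bergman_space :: "real \<Rightarrow> (complex \<times> complex \<Rightarrow> complex) set" where
  "bergman_space \<gamma> = {g. holo2 g (Hdom \<gamma>) \<and> sq_int g (Hdom \<gamma>) \<and> (\<forall>z. z \<notin> Hdom \<gamma> \<longrightarrow> g z = 0)}"

definition l2_inner :: "real \<Rightarrow> (complex \<times> complex \<Rightarrow> complex) \<Rightarrow> (complex \<times> complex \<Rightarrow> complex) \<Rightarrow> complex" where
  "l2_inner \<gamma> f h = (LINT z:Hdom \<gamma>|lborel. f z * cnj (h z))"

definition bergman_proj :: "real \<Rightarrow> (complex \<times> complex \<Rightarrow> complex) \<Rightarrow> (complex \<times> complex \<Rightarrow> complex)" where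
  "bergman_proj \<gamma> f = (THE g. g \<in> bergman_space \<gamma> \<and>
      (\<forall>h\<in>bergman_space \<gamma>. l2_inner \<gamma> (\<lambda>z. f z - g z) h = 0))"

definition A2 :: "real \<Rightarrow> (int \<times> int) set" where
  "A2 \<gamma> = {\<alpha>. fst \<alpha> \<ge> 0 \<and>
      sq_int (\<lambda>z. fst z powi fst \<alpha> * snd z powi snd \<alpha>) (Hdom \<gamma>)}"

end

theory Submission
  imports Defs "HOL-Complex_Analysis.Complex_Analysis"
begin


lemma lborel_complex_eq:
  "(lborel :: complex measure) = distr (lborel :: (real \<times> real) measure) borel (\<lambda>p. Complex (fst p) (snd p))"
proof (rule lborel_eqI)
  fix l u :: complex
  assume le: "\<And>b. b \<in> Basis \<Longrightarrow> l \<bullet> b \<le> u \<bullet> b"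
  have m: "(\<lambda>p. Complex (fst p) (snd p)) \<in> borel_measurable (lborel :: (real \<times> real) measure)"
  proof -
    have "(\<lambda>p. Complex (fst p) (snd p)) = (\<lambda>p. complex_of_real (fst p) + \<i> * complex_of_real (snd p))"
      by (auto simp: Complex_eq)
    then show ?thesis by (auto intro!: borel_measurable_continuous_onI continuous_intros)
  qed
  have pre: "(\<lambda>p. Complex (fst p) (snd p)) -` box l u \<inter> space lborel = box (Re l, Im l) (Re u, Im u)"
    by (auto simp: mem_box Basis_complex_def Basis_prod_def complex_inner_1_right complex_inner_i_right)
  have "Re l \<le> Re u" "Im l \<le> Im u" using le[of 1] le[of \<i>] by (auto simp: Basis_complex_def complex_inner_1_right complex_inner_i_right)
  then show "emeasure (distr lborel borel (\<lambda>p. Complex (fst p) (snd p))) (box l u) = (\<Prod>b\<in>Basis. (u - l) \<bullet> b)"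
    using m pre
    by (simp add: emeasure_distr emeasure_lborel_box_eq Basis_complex_def Basis_prod_def complex_inner_1_right complex_inner_i_right)
qed simp


abbreviation "LL \<equiv> (lborel \<Otimes>\<^sub>M lborel :: (real\<times>real) measure)"

lemma nn_RR: "f \<in> borel_measurable LL \<Longrightarrow>
  (\<integral>\<^sup>+p. f p \<partial>LL) = (\<integral>\<^sup>+x. \<integral>\<^sup>+y. f (x,y) \<partial>lborel \<partial>lborel)"
  by (rule sigma_finite_measure.nn_integral_fst[OF sigma_finite_lborel, symmetric])

lemma nn_RR': "f \<in> borel_measurable LL \<Longrightarrow>
  (\<integral>\<^sup>+p. f p \<partial>LL) = (\<integral>\<^sup>+y. \<integral>\<^sup>+x. f (x,y) \<partial>lborel \<partial>lborel)"
  apply (subst nn_RR, assumption)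
  apply (subst lborel_pair.Fubini')
  by (auto simp: measurable_split_conv)

definition presRR :: "(real \<times> real \<Rightarrow> real \<times> real) \<Rightarrow> bool" where
  "presRR T \<longleftrightarrow> T \<in> LL \<rightarrow>\<^sub>M LL \<and> (\<forall>f::real\<times>real\<Rightarrow>ennreal. f \<in> borel_measurable LL \<longrightarrow>
      (\<integral>\<^sup>+p. f (T p) \<partial>LL) = (\<integral>\<^sup>+p. f p \<partial>LL))"

lemma presRR_comp: assumes "presRR S" "presRR T" shows "presRR (S \<circ> T)"
  unfolding presRR_def
proof (intro conjI allI impI)
  show "S \<circ> T \<in> LL \<rightarrow>\<^sub>M LL" using assms unfolding presRR_def by (auto intro: measurable_comp)
  fix f :: "real\<times>real \<Rightarrow> ennreal" assume f: "f \<in> borel_measurable LL"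
  have fS: "(\<lambda>p. f (S p)) \<in> borel_measurable LL" using assms f unfolding presRR_def
    by (auto intro: measurable_compose)
  have "(\<integral>\<^sup>+p. f ((S \<circ> T) p) \<partial>LL) = (\<integral>\<^sup>+p. (\<lambda>q. f (S q)) (T p) \<partial>LL)" by simp
  also have "\<dots> = (\<integral>\<^sup>+p. f (S p) \<partial>LL)" using assms(2) fS unfolding presRR_def by blast
  also have "\<dots> = (\<integral>\<^sup>+p. f p \<partial>LL)" using assms(1) f unfolding presRR_def by blast
  finally show "(\<integral>\<^sup>+p. f ((S \<circ> T) p) \<partial>LL) = (\<integral>\<^sup>+p. f p \<partial>LL)" .
qed

lemma presRR_shear_y: "presRR (\<lambda>(x,y). (x, y + a * x))"
  unfolding presRR_def
proof (intro conjI allI impI)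
  show "(\<lambda>(x,y). (x, y + a * x)) \<in> LL \<rightarrow>\<^sub>M LL" by measurable
  fix f :: "real\<times>real \<Rightarrow> ennreal" assume f[measurable]: "f \<in> borel_measurable LL"
  have "(\<integral>\<^sup>+p. f (case p of (x,y) \<Rightarrow> (x, y + a * x)) \<partial>LL) = (\<integral>\<^sup>+x. \<integral>\<^sup>+y. f (x, y + a*x) \<partial>lborel \<partial>lborel)"
    by (subst nn_RR) auto
  also have "\<dots> = (\<integral>\<^sup>+x. \<integral>\<^sup>+y. f (x, y) \<partial>lborel \<partial>lborel)"
  proof (rule nn_integral_cong)
    fix x
    show "(\<integral>\<^sup>+y. f (x, y + a*x) \<partial>lborel) = (\<integral>\<^sup>+y. f (x, y) \<partial>lborel)"
      using nn_integral_real_affine[of "\<lambda>y. f (x,y)" 1 "a*x"] by (simp add: add.commute)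
  qed
  also have "\<dots> = (\<integral>\<^sup>+p. f p \<partial>LL)" by (subst nn_RR) auto
  finally show "(\<integral>\<^sup>+p. f (case p of (x,y) \<Rightarrow> (x, y + a * x)) \<partial>LL) = (\<integral>\<^sup>+p. f p \<partial>LL)" .
qed

lemma presRR_shear_x: "presRR (\<lambda>(x,y). (x + a * y, y))"
  unfolding presRR_def
proof (intro conjI allI impI)
  show "(\<lambda>(x,y). (x + a * y, y)) \<in> LL \<rightarrow>\<^sub>M LL" by measurable
  fix f :: "real\<times>real \<Rightarrow> ennreal" assume f[measurable]: "f \<in> borel_measurable LL"
  have "(\<integral>\<^sup>+p. f (case p of (x,y) \<Rightarrow> (x + a * y, y)) \<partial>LL) = (\<integral>\<^sup>+y. \<integral>\<^sup>+x. f (x + a*y, y) \<partial>lborel \<partial>lborel)"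
    by (subst nn_RR') auto
  also have "\<dots> = (\<integral>\<^sup>+y. \<integral>\<^sup>+x. f (x, y) \<partial>lborel \<partial>lborel)"
  proof (rule nn_integral_cong)
    fix y
    show "(\<integral>\<^sup>+x. f (x + a*y, y) \<partial>lborel) = (\<integral>\<^sup>+x. f (x, y) \<partial>lborel)"
      using nn_integral_real_affine[of "\<lambda>x. f (x,y)" 1 "a*y"] by (simp add: add.commute)
  qed
  also have "\<dots> = (\<integral>\<^sup>+p. f p \<partial>LL)" by (subst nn_RR') auto
  finally show "(\<integral>\<^sup>+p. f (case p of (x,y) \<Rightarrow> (x + a * y, y)) \<partial>LL) = (\<integral>\<^sup>+p. f p \<partial>LL)" .
qed

lemma presRR_scale: assumes c: "c \<noteq> 0" shows "presRR (\<lambda>(x,y). (c * x, y / c))"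
  unfolding presRR_def
proof (intro conjI allI impI)
  show "(\<lambda>(x,y). (c * x, y / c)) \<in> LL \<rightarrow>\<^sub>M LL" by measurable
  fix f :: "real\<times>real \<Rightarrow> ennreal" assume f[measurable]: "f \<in> borel_measurable LL"
  have "(\<integral>\<^sup>+p. f (case p of (x,y) \<Rightarrow> (c * x, y / c)) \<partial>LL) = (\<integral>\<^sup>+x. \<integral>\<^sup>+y. f (c*x, y / c) \<partial>lborel \<partial>lborel)"
    by (subst nn_RR) auto
  also have "\<dots> = (\<integral>\<^sup>+x. ennreal \<bar>c\<bar> * \<integral>\<^sup>+y. f (c*x, y) \<partial>lborel \<partial>lborel)"
  proof (rule nn_integral_cong)
    fix x
    have "(\<integral>\<^sup>+y. f (c*x, y) \<partial>lborel) = ennreal \<bar>1/c\<bar> * (\<integral>\<^sup>+y. f (c*x, 0 + (1/c) * y) \<partial>lborel)"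
      using c by (intro nn_integral_real_affine) auto
    then have "ennreal \<bar>c\<bar> * (\<integral>\<^sup>+y. f (c*x, y) \<partial>lborel) = (ennreal \<bar>c\<bar> * ennreal \<bar>1/c\<bar>) * (\<integral>\<^sup>+y. f (c*x, y / c) \<partial>lborel)"
      by (simp add: mult.assoc)
    also have "ennreal \<bar>c\<bar> * ennreal \<bar>1/c\<bar> = 1" using c
      by (simp add: ennreal_mult[symmetric] abs_mult[symmetric])
    finally show "(\<integral>\<^sup>+y. f (c*x, y / c) \<partial>lborel) = ennreal \<bar>c\<bar> * (\<integral>\<^sup>+y. f (c*x, y) \<partial>lborel)" by simp
  qed
  also have "\<dots> = ennreal \<bar>c\<bar> * (\<integral>\<^sup>+x. \<integral>\<^sup>+y. f (c*x, y) \<partial>lborel \<partial>lborel)"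
    by (rule nn_integral_cmult) measurable
  also have "(\<integral>\<^sup>+x. \<integral>\<^sup>+y. f (x, y) \<partial>lborel \<partial>lborel) = ennreal \<bar>c\<bar> * (\<integral>\<^sup>+x. \<integral>\<^sup>+y. f (0 + c*x, y) \<partial>lborel \<partial>lborel)"
    using c by (intro nn_integral_real_affine) measurable
  then have "ennreal \<bar>c\<bar> * (\<integral>\<^sup>+x. \<integral>\<^sup>+y. f (c*x, y) \<partial>lborel \<partial>lborel) = (\<integral>\<^sup>+x. \<integral>\<^sup>+y. f (x, y) \<partial>lborel \<partial>lborel)"
    by simp
  also have "\<dots> = (\<integral>\<^sup>+p. f p \<partial>LL)" by (subst nn_RR) auto
  finally show "(\<integral>\<^sup>+p. f (case p of (x,y) \<Rightarrow> (c * x, y / c)) \<partial>LL) = (\<integral>\<^sup>+p. f p \<partial>LL)" .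
qed



definition rotRR :: "real \<Rightarrow> real \<Rightarrow> real \<times> real \<Rightarrow> real \<times> real" where
  "rotRR a b = (\<lambda>(x,y). (a*x - b*y, b*x + a*y))"

lemma presRR_rot_nz: assumes "a\<^sup>2 + b\<^sup>2 = 1" "a \<noteq> 0" shows "presRR (rotRR a b)"
proof -
  have "rotRR a b = (\<lambda>(x,y). (x, y + (b/a) * x)) \<circ> (\<lambda>(x,y). (a * x, y / a)) \<circ> (\<lambda>(x,y). (x + (-(b/a)) * y, y))"
  proof (rule ext, clarify)
    fix x y
    have ab: "1 - b*b = a*a" using assms(1) by (simp add: power2_eq_square)
    have "y / a + b / a * (a * (x + - (b / a) * y)) = b*x + y*(1 - b*b)/a"
      using assms(2) by (simp add: field_simps)
    also have "\<dots> = b*x + a*y" using assms(2) by (simp add: ab)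
    finally have e2: "b*x + a*y = y / a + b / a * (a * (x + - (b / a) * y))" by simp
    show "rotRR a b (x, y) = ((\<lambda>(x,y). (x, y + (b/a) * x)) \<circ> (\<lambda>(x,y). (a * x, y / a)) \<circ> (\<lambda>(x,y). (x + (-(b/a)) * y, y))) (x, y)"
      using assms(2) e2 by (simp add: rotRR_def field_simps)
  qed
  moreover have "presRR ((\<lambda>(x,y). (x, y + (b/a) * x)) \<circ> (\<lambda>(x,y). (a * x, y / a)) \<circ> (\<lambda>(x,y). (x + (-(b/a)) * y, y)))"
    by (intro presRR_comp presRR_shear_x presRR_shear_y presRR_scale assms(2))
  ultimately show ?thesis by simp
qed

lemma presRR_rot: assumes "a\<^sup>2 + b\<^sup>2 = 1" shows "presRR (rotRR a b)"
proof (cases "a = 0")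
  case False then show ?thesis using presRR_rot_nz assms by blast
next
  case True
  define q where "q = sqrt (1/2)"
  have s2: "q^2 = 1/2" "q > 0" unfolding q_def by (auto simp: real_sqrt_divide power_divide)
  have b2: "b^2 = 1" using assms True by simp
  have "rotRR a b = (rotRR q q) \<circ> (rotRR (b * q) (b * q))"
  proof (rule ext, clarify)
    fix x y
    have ss: "q * q = 1/2" using s2 by (simp add: power2_eq_square)
    have bb: "b * b = 1" using b2 by (simp add: power2_eq_square)
    have "q * (b * q * x - b * q * y) - q * (b * q * x + b * q * y) = - (b * y) * (2 * (q*q))"
      by (simp add: algebra_simps)
    moreover have "q * (b * q * x - b * q * y) + q * (b * q * x + b * q * y) = b * x * (2*(q*q))"
      by (simp add: algebra_simps)
    ultimately show "rotRR a b (x, y) = (rotRR q q \<circ> rotRR (b * q) (b * q)) (x, y)"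
      using True ss by (simp add: rotRR_def)
  qed
  moreover have "presRR (rotRR q q)" using s2 by (intro presRR_rot_nz) auto
  moreover have "presRR (rotRR (b*q) (b*q))" using s2 b2 by (intro presRR_rot_nz) (auto simp: power_mult_distrib)
  ultimately show ?thesis by (simp add: presRR_comp)
qed

lemma phi_meas: "(\<lambda>p. Complex (fst p) (snd p)) \<in> LL \<rightarrow>\<^sub>M (borel :: complex measure)"
proof -
  have "(\<lambda>p. Complex (fst p) (snd p)) = (\<lambda>p. complex_of_real (fst p) + \<i> * complex_of_real (snd p))"
    by (auto simp: Complex_eq)
  then show ?thesis by (simp add: measurable_split_conv)
qed

lemma nn_integral_rot_C:
  fixes g :: "complex \<Rightarrow> ennreal"
  assumes g[measurable]: "g \<in> borel_measurable borel" and c: "cmod c = 1"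
  shows "(\<integral>\<^sup>+z. g (c * z) \<partial>lborel) = (\<integral>\<^sup>+z. g z \<partial>lborel)"
proof -
  let ?phi = "\<lambda>p. Complex (fst p) (snd p)"
  have L: "(lborel :: complex measure) = distr LL borel ?phi"
    by (simp add: lborel_prod lborel_complex_eq)
  have [measurable]: "?phi \<in> LL \<rightarrow>\<^sub>M borel" by (rule phi_meas)
  have cm[measurable]: "(\<lambda>z. g (c * z)) \<in> borel_measurable borel" by measurable
  have pr: "presRR (rotRR (Re c) (Im c))"
    using c by (intro presRR_rot) (simp add: cmod_def)
  have gphi: "(\<lambda>p. g (?phi p)) \<in> borel_measurable LL" by measurable
  have eq: "\<And>p. g (c * ?phi p) = g (?phi (rotRR (Re c) (Im c) p))"
    by (auto simp: rotRR_def split: prod.splits intro!: arg_cong[where f=g] complex_eqI)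
  have "(\<integral>\<^sup>+z. g (c * z) \<partial>lborel) = (\<integral>\<^sup>+p. g (c * ?phi p) \<partial>LL)"
    by (subst L, subst nn_integral_distr) auto
  also have "\<dots> = (\<integral>\<^sup>+p. g (?phi (rotRR (Re c) (Im c) p)) \<partial>LL)" by (simp add: eq)
  also have "\<dots> = (\<integral>\<^sup>+p. g (?phi p) \<partial>LL)"
    using pr gphi unfolding presRR_def by blast
  also have "\<dots> = (\<integral>\<^sup>+z. g z \<partial>lborel)"
    by (subst L, subst nn_integral_distr) auto
  finally show ?thesis .
qed

lemma distr_rot_C: assumes c: "cmod c = 1"
  shows "distr lborel borel (\<lambda>z. c * z) = (lborel :: complex measure)"
proof (rule measure_eqI)
  show "sets (distr lborel borel (\<lambda>z. c * z)) = sets (lborel :: complex measure)" by simp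
  fix A assume A: "A \<in> sets (distr lborel borel (\<lambda>z::complex. c * z))"
  then have A': "A \<in> sets borel" by simp
  have "emeasure (distr lborel borel (\<lambda>z. c * z)) A = (\<integral>\<^sup>+z. indicator A (c * z) \<partial>lborel)"
  proof -
    have m: "(\<lambda>z. c * z) -` A \<in> sets lborel" using measurable_sets[of "\<lambda>z. c*z" lborel borel A] A' by simp
    have "emeasure (distr lborel borel (\<lambda>z. c * z)) A = emeasure lborel ((\<lambda>z. c * z) -` A)"
      using A' by (subst emeasure_distr) auto
    also have "\<dots> = (\<integral>\<^sup>+z. indicator ((\<lambda>z. c * z) -` A) z \<partial>lborel)"
      using m by (rule nn_integral_indicator[symmetric])
    finally show ?thesis by (simp add: indicator_def)
  qed
  also have "\<dots> = (\<integral>\<^sup>+z. indicator A z \<partial>lborel)"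
    using A' c by (intro nn_integral_rot_C) auto
  also have "\<dots> = emeasure lborel A" using A' by simp
  finally show "emeasure (distr lborel borel (\<lambda>z. c * z)) A = emeasure lborel A" .
qed



definition rot2 :: "complex \<Rightarrow> complex \<Rightarrow> complex \<times> complex \<Rightarrow> complex \<times> complex" where
  "rot2 c1 c2 = (\<lambda>z. (c1 * fst z, c2 * snd z))"

lemma rot2_meas[measurable]: "rot2 c1 c2 \<in> borel_measurable borel"
  unfolding rot2_def by (intro borel_measurable_continuous_onI continuous_intros)

lemma distr_rot2: assumes "cmod c1 = 1" "cmod c2 = 1"
  shows "distr lborel borel (rot2 c1 c2) = (lborel :: (complex\<times>complex) measure)"
proof -
  have "(lborel :: (complex\<times>complex) measure) = distr lborel borel (\<lambda>z. c1 * z) \<Otimes>\<^sub>M distr lborel borel (\<lambda>z. c2 * z)"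
    by (simp add: distr_rot_C assms lborel_prod)
  also have "\<dots> = distr (lborel \<Otimes>\<^sub>M lborel) (borel \<Otimes>\<^sub>M borel) (\<lambda>(x, y). (c1 * x, c2 * y))"
    by (rule pair_measure_distr) (auto simp: distr_rot_C assms intro: sigma_finite_lborel)
  also have "\<dots> = distr lborel borel (rot2 c1 c2)"
    by (simp add: lborel_prod borel_prod rot2_def case_prod_beta')
  finally show ?thesis by simp
qed

lemma integral_rot2:
  fixes f :: "complex \<times> complex \<Rightarrow> 'b::{banach, second_countable_topology}"
  assumes "cmod c1 = 1" "cmod c2 = 1" "f \<in> borel_measurable borel"
  shows "(\<integral>z. f (rot2 c1 c2 z) \<partial>lborel) = (\<integral>z. f z \<partial>lborel)"
proof -
  have "(\<integral>z. f z \<partial>lborel) = (\<integral>z. f z \<partial>distr lborel borel (rot2 c1 c2))"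
    by (simp add: distr_rot2 assms)
  also have "\<dots> = (\<integral>z. f (rot2 c1 c2 z) \<partial>lborel)"
    by (rule integral_distr) (auto simp: assms)
  finally show ?thesis by simp
qed

lemma nn_integral_rot2:
  fixes f :: "complex \<times> complex \<Rightarrow> ennreal"
  assumes "cmod c1 = 1" "cmod c2 = 1" "f \<in> borel_measurable borel"
  shows "(\<integral>\<^sup>+z. f (rot2 c1 c2 z) \<partial>lborel) = (\<integral>\<^sup>+z. f z \<partial>lborel)"
proof -
  have "(\<integral>\<^sup>+z. f z \<partial>lborel) = (\<integral>\<^sup>+z. f z \<partial>distr lborel borel (rot2 c1 c2))"
    by (simp add: distr_rot2 assms)
  also have "\<dots> = (\<integral>\<^sup>+z. f (rot2 c1 c2 z) \<partial>lborel)"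
    by (rule nn_integral_distr) (auto simp: assms)
  finally show ?thesis by simp
qed

lemma Hdom_rot2: assumes "cmod c1 = 1" "cmod c2 = 1" shows "rot2 c1 c2 z \<in> Hdom g \<longleftrightarrow> z \<in> Hdom g"
  using assms by (simp add: rot2_def Hdom_def norm_mult)



definition ee :: "real \<Rightarrow> complex" where "ee t = exp (2 * of_real pi * \<i> * of_real t)"

lemma ee_add: "ee (s + t) = ee s * ee t"
  by (simp add: ee_def distrib_left exp_add)

lemma ee_1: "ee 1 = 1"
  by (simp add: ee_def exp_eq_1)

lemma ee_sub1: "ee (t - 1) = ee t"
  by (simp add: ee_def right_diff_distrib exp_diff exp_eq_1)

lemma norm_ee [simp]: "cmod (ee t) = 1"
  by (simp add: ee_def norm_exp_eq_Re)

lemma ee_nz [simp]: "ee t \<noteq> 0"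
  by (simp add: ee_def)

lemma cnj_ee: "cnj (ee t) = inverse (ee t)"
  by (simp add: ee_def exp_cnj exp_minus)

lemma continuous_on_ee [continuous_intros]: "continuous_on S ee"
  unfolding ee_def by (intro continuous_intros)

lemma has_vector_derivative_ee:
  "((\<lambda>t. w * ee t) has_vector_derivative (w * (2 * of_real pi * \<i> * ee t))) (at t)"
proof -
  have "((\<lambda>t. exp (2 * of_real pi * \<i> * of_real t)) has_vector_derivative
          (exp (2 * of_real pi * \<i> * of_real t) * (2 * of_real pi * \<i>))) (at t)"
    by (rule has_vector_derivative_real_field) (auto intro!: derivative_eq_intros)
  then show ?thesis unfolding ee_def
    by (auto intro!: derivative_eq_intros simp: mult_ac)
qed

lemma circlepath_ee: "circlepath 0 r = (\<lambda>t. complex_of_real r * ee t)"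
  by (simp add: circlepath_def part_circlepath_def ee_def linepath_def fun_eq_iff mult_ac)

lemma powi_shift: fixes x :: complex shows "x \<noteq> 0 \<Longrightarrow> x powi (n - 1) * x = x powi n"
  using power_int_add[of x "n-1" 1] by simp

lemma contour_P:
  fixes F :: "complex \<Rightarrow> complex" and n :: int
  assumes w: "w \<noteq> 0" and cont: "continuous_on {0..1} (\<lambda>t. F (w * ee t))"
  shows "contour_integral (\<lambda>t. w * ee t) (\<lambda>\<zeta>. F \<zeta> * \<zeta> powi (n-1))
     = 2 * of_real pi * \<i> * w powi n * integral {0..1} (\<lambda>t. F (w * ee t) * ee t powi n)"
proof -
  define K where "K t = 2 * of_real pi * \<i> * w powi n * (F (w * ee t) * ee t powi n)" for t
  have Keq: "F (w * ee t) * (w * ee t) powi (n-1) * vector_derivative (\<lambda>t. w * ee t) (at t) = K t" for t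
  proof -
    have "vector_derivative (\<lambda>t. w * ee t) (at t) = w * (2 * of_real pi * \<i> * ee t)"
      by (rule vector_derivative_at[OF has_vector_derivative_ee])
    moreover have "(w * ee t) powi (n-1) * (w * ee t) = w powi n * ee t powi n"
      using w powi_shift[of "w * ee t" n] by (simp add: power_int_mult_distrib)
    ultimately show ?thesis unfolding K_def
      by (simp add: mult_ac)
  qed
  have Kc: "continuous_on {0..1} K"
    unfolding K_def by (intro continuous_intros cont) auto
  have "(K has_integral integral {0..1} K) {0..1}"
    using integrable_continuous_real[OF Kc] by (simp add: has_integral_integral)
  then have "((\<lambda>\<zeta>. F \<zeta> * \<zeta> powi (n-1)) has_contour_integral integral {0..1} K) (\<lambda>t. w * ee t)"
    unfolding has_contour_integral by (simp add: Keq)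
  then have "contour_integral (\<lambda>t. w * ee t) (\<lambda>\<zeta>. F \<zeta> * \<zeta> powi (n-1)) = integral {0..1} K"
    by (rule contour_integral_unique)
  also have "\<dots> = 2 * of_real pi * \<i> * w powi n * integral {0..1} (\<lambda>t. F (w * ee t) * ee t powi n)"
    unfolding K_def by (rule integral_mult_right)
  finally show ?thesis .
qed



lemma P_shift:
  fixes w :: complex assumes "w \<noteq> 0"
  obtains a where "a \<in> {0..1}" "(\<lambda>t. w * ee t) = shiftpath a (circlepath 0 (cmod w))"
proof -
  define a where "a = Arg2pi w / (2 * pi)"
  have a: "0 \<le> a" "a < 1" using Arg2pi[of w] by (auto simp: a_def field_simps)
  have wa: "w = complex_of_real (cmod w) * ee a"
  proof -
    have "is_Arg w (Arg2pi w)" using Arg2pi by blast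
    then have "w = complex_of_real (cmod w) * exp (\<i> * complex_of_real (Arg2pi w))" by (simp add: is_Arg_def)
    moreover have "\<i> * complex_of_real (Arg2pi w) = 2 * of_real pi * \<i> * of_real a"
      by (simp add: a_def)
    ultimately show ?thesis by (simp add: ee_def)
  qed
  have "(\<lambda>t. w * ee t) = shiftpath a (circlepath 0 (cmod w))"
  proof
    fix t
    have "w * ee t = complex_of_real (cmod w) * ee (a + t)" by (subst wa) (simp add: ee_add)
    moreover have "ee (a + t - 1) = ee (a + t)" by (rule ee_sub1)
    ultimately show "w * ee t = shiftpath a (circlepath 0 (cmod w)) t"
      by (simp add: shiftpath_def circlepath_ee)
  qed
  then show ?thesis using a by (intro that[of a]) auto
qed

lemma contour_P_circle:
  assumes "w \<noteq> 0"
  shows "contour_integral (\<lambda>t. w * ee t) G = contour_integral (circlepath 0 (cmod w)) G"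
proof -
  obtain a where a: "a \<in> {0..1}" "(\<lambda>t. w * ee t) = shiftpath a (circlepath 0 (cmod w))"
    using P_shift assms by blast
  show ?thesis unfolding a(2) by (rule contour_integral_shiftpath) (use a in auto)
qed

lemma circle_avg_indep:
  fixes F :: "complex \<Rightarrow> complex" and n :: int
  assumes S: "open S" and F: "F holomorphic_on S" and w: "w \<noteq> 0" and w': "w' \<noteq> 0"
    and ann: "\<And>\<zeta>. min (cmod w) (cmod w') \<le> cmod \<zeta> \<Longrightarrow> cmod \<zeta> \<le> max (cmod w) (cmod w') \<Longrightarrow> \<zeta> \<in> S"
  shows "w powi n * integral {0..1} (\<lambda>t. F (w * ee t) * ee t powi n)
       = w' powi n * integral {0..1} (\<lambda>t. F (w' * ee t) * ee t powi n)"
proof -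
  define G where "G \<zeta> = F \<zeta> * \<zeta> powi (n-1)" for \<zeta>
  have Fc: "continuous_on S F" using F holomorphic_on_imp_continuous_on by blast
  have cP: "continuous_on {0..1} (\<lambda>t. F (v * ee t))" if "v = w \<or> v = w'" for v
  proof (rule continuous_on_compose2[OF Fc])
    show "continuous_on {0..1} (\<lambda>t. v * ee t)" by (intro continuous_intros)
    show "(\<lambda>t. v * ee t) ` {0..1} \<subseteq> S" using that by (auto intro!: ann simp: norm_mult)
  qed
  have Gh: "G holomorphic_on (S - {0})"
    unfolding G_def by (intro holomorphic_intros holomorphic_on_subset[OF F]) auto
  have hom: "homotopic_loops (S - {0}) (circlepath 0 (cmod w)) (circlepath 0 (cmod w'))"
  proof (rule homotopic_loops_linear)
    fix t :: real assume t: "t \<in> {0..1}"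
    show "closed_segment (circlepath 0 (cmod w) t) (circlepath 0 (cmod w') t) \<subseteq> S - {0}"
    proof
      fix x assume "x \<in> closed_segment (circlepath 0 (cmod w) t) (circlepath 0 (cmod w') t)"
      then obtain u where u: "0 \<le> u" "u \<le> 1"
        "x = (1 - u) *\<^sub>R (complex_of_real (cmod w) * ee t) + u *\<^sub>R (complex_of_real (cmod w') * ee t)"
        by (auto simp: closed_segment_def circlepath_ee)
      then have x: "x = complex_of_real ((1-u) * cmod w + u * cmod w') * ee t"
        by (simp add: scaleR_conv_of_real algebra_simps)
      have m1: "(1-u) * min (cmod w) (cmod w') \<le> (1-u) * cmod w" "u * min (cmod w) (cmod w') \<le> u * cmod w'"
        "(1-u) * cmod w \<le> (1-u) * max (cmod w) (cmod w')" "u * cmod w' \<le> u * max (cmod w) (cmod w')"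
        using u(1,2) by (intro mult_left_mono; simp)+
      have "min (cmod w) (cmod w') \<le> (1-u) * cmod w + u * cmod w'"
        "(1-u) * cmod w + u * cmod w' \<le> max (cmod w) (cmod w')"
        using m1 by (simp_all add: algebra_simps)
      moreover have "0 < min (cmod w) (cmod w')" using w w' by auto
      moreover define R where "R = (1-u) * cmod w + u * cmod w'"
      ultimately have R: "min (cmod w) (cmod w') \<le> R" "R \<le> max (cmod w) (cmod w')" "0 < R"
        by (auto simp del: min_less_iff_conj)
      have "x = complex_of_real R * ee t" using x by (simp add: R_def)
      then have cx: "cmod x = R" using R(3) by (simp add: norm_mult)
      show "x \<in> S - {0}" using R cx ann[of x] by auto
    qed
  qed simp_all
  have "2 * of_real pi * \<i> * w powi n * integral {0..1} (\<lambda>t. F (w * ee t) * ee t powi n)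
        = contour_integral (\<lambda>t. w * ee t) G"
    unfolding G_def by (rule contour_P[symmetric]) (use w cP in auto)
  also have "\<dots> = contour_integral (circlepath 0 (cmod w)) G" by (rule contour_P_circle[OF w])
  also have "\<dots> = contour_integral (circlepath 0 (cmod w')) G"
    by (rule Cauchy_theorem_homotopic_loops[OF hom _ Gh]) (use S in auto)
  also have "\<dots> = contour_integral (\<lambda>t. w' * ee t) G" by (rule contour_P_circle[OF w', symmetric])
  also have "\<dots> = 2 * of_real pi * \<i> * w' powi n * integral {0..1} (\<lambda>t. F (w' * ee t) * ee t powi n)"
    unfolding G_def by (rule contour_P) (use w' cP in auto)
  finally show ?thesis by (simp add: mult.assoc)
qed



lemma cont_powr_norm: "0 < g \<Longrightarrow> continuous_on S (\<lambda>x::complex. cmod x powr g)"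
  by (rule continuous_on_powr') (auto intro!: continuous_intros)

lemma Hdom_snd_nz: "z \<in> Hdom g \<Longrightarrow> snd z \<noteq> 0"
  by (auto simp: Hdom_def)

lemma open_Hdom: assumes "0 < g" shows "open (Hdom g)"
proof -
  have c1: "continuous_on UNIV (\<lambda>z::complex\<times>complex. cmod (fst z) powr g)"
    using assms by (intro continuous_on_powr') (auto intro!: continuous_intros)
  have c2: "continuous_on UNIV (\<lambda>z::complex\<times>complex. cmod (snd z))"
    by (intro continuous_intros)
  have "Hdom g = {z. cmod (fst z) powr g < cmod (snd z)} \<inter> {z. cmod (snd z) < 1}"
    by (auto simp: Hdom_def)
  moreover have "open {z::complex\<times>complex. cmod (fst z) powr g < cmod (snd z)}"
    using open_Collect_less[OF c1 c2] by simp
  moreover have "open {z::complex\<times>complex. cmod (snd z) < 1}"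
    using open_Collect_less[OF c2, of "\<lambda>_. 1"] by simp
  ultimately show ?thesis by auto
qed

lemma Hdom_meas[measurable]: assumes "0 < g" shows "Hdom g \<in> sets borel"
  using open_Hdom[OF assms] by simp

lemma holo2_cont: assumes "holo2 f S" "open S" shows "continuous_on S f"
proof -
  have "\<forall>z\<in>S. isCont f z"
    using assms(1) unfolding holo2_def by (auto intro: has_derivative_continuous)
  then show ?thesis by (simp add: continuous_at_imp_continuous_on)
qed

lemma holo2_fst:
  assumes h: "holo2 f S" and S: "open S"
  shows "(\<lambda>\<zeta>. f (\<zeta>, w)) holomorphic_on {\<zeta>. (\<zeta>, w) \<in> S}"
proof -
  have "(\<lambda>\<zeta>. f (\<zeta>, w)) field_differentiable at \<zeta>" if z: "(\<zeta>, w) \<in> S" for \<zeta>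
  proof -
    obtain L where L: "(f has_derivative L) (at (\<zeta>, w))" "\<forall>c v. L (c * fst v, c * snd v) = c * L v"
      using h z unfolding holo2_def by blast
    have "((\<lambda>\<zeta>. (\<zeta>, w)) has_derivative (\<lambda>d. (d, 0))) (at \<zeta>)"
      by (auto intro!: derivative_eq_intros)
    from has_derivative_compose[OF this L(1)]
    have "((\<lambda>\<zeta>. f (\<zeta>, w)) has_derivative (\<lambda>d. L (d, 0))) (at \<zeta>)" .
    moreover have "(\<lambda>d. L (d, 0)) = (*) (L (1, 0))"
    proof
      fix d show "L (d, 0) = L (1, 0) * d" using L(2)[rule_format, of d "(1,0)"] by (simp add: mult.commute)
    qed
    ultimately have "((\<lambda>\<zeta>. f (\<zeta>, w)) has_field_derivative L (1,0)) (at \<zeta>)"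
      unfolding has_field_derivative_def by simp
    then show ?thesis using field_differentiable_def by blast
  qed
  moreover have "open {\<zeta>. (\<zeta>, w) \<in> S}"
  proof -
    have "{\<zeta>. (\<zeta>, w) \<in> S} = (\<lambda>\<zeta>. (\<zeta>, w)) -` S" by auto
    then show ?thesis using S by (auto intro!: continuous_open_vimage continuous_intros)
  qed
  ultimately show ?thesis
    by (simp add: holomorphic_on_open field_differentiable_def)
qed

lemma holo2_snd:
  assumes h: "holo2 f S" and S: "open S"
  shows "(\<lambda>\<omega>. f (z, \<omega>)) holomorphic_on {\<omega>. (z, \<omega>) \<in> S}"
proof -
  have "(\<lambda>\<omega>. f (z, \<omega>)) field_differentiable at \<omega>" if z: "(z, \<omega>) \<in> S" for \<omega>
  proof -
    obtain L where L: "(f has_derivative L) (at (z, \<omega>))" "\<forall>c v. L (c * fst v, c * snd v) = c * L v"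
      using h z unfolding holo2_def by blast
    have "((\<lambda>\<omega>. (z, \<omega>)) has_derivative (\<lambda>d. (0, d))) (at \<omega>)"
      by (auto intro!: derivative_eq_intros)
    from has_derivative_compose[OF this L(1)]
    have "((\<lambda>\<omega>. f (z, \<omega>)) has_derivative (\<lambda>d. L (0, d))) (at \<omega>)" .
    moreover have "(\<lambda>d. L (0, d)) = (*) (L (0, 1))"
    proof
      fix d show "L (0, d) = L (0, 1) * d" using L(2)[rule_format, of d "(0,1)"] by (simp add: mult.commute)
    qed
    ultimately have "((\<lambda>\<omega>. f (z, \<omega>)) has_field_derivative L (0,1)) (at \<omega>)"
      unfolding has_field_derivative_def by simp
    then show ?thesis using field_differentiable_def by blast
  qed
  moreover have "open {\<omega>. (z, \<omega>) \<in> S}"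
  proof -
    have "{\<omega>. (z, \<omega>) \<in> S} = (\<lambda>\<omega>. (z, \<omega>)) -` S" by auto
    then show ?thesis using S by (auto intro!: continuous_open_vimage continuous_intros)
  qed
  ultimately show ?thesis
    by (simp add: holomorphic_on_open field_differentiable_def)
qed



definition Hav :: "int \<Rightarrow> int \<Rightarrow> (complex\<times>complex \<Rightarrow> complex) \<Rightarrow> complex\<times>complex \<Rightarrow> complex" where
  "Hav b1 b2 h z = integral {0..1} (\<lambda>s. integral {0..1} (\<lambda>t.
      h (fst z * ee s, snd z * ee t) * ee s powi (-b1) * ee t powi b2))"

lemma Hav_z2:
  assumes g: "0 < g" and h: "holo2 h (Hdom g)"
    and z: "(z1, z2) \<in> Hdom g" and z': "(z1, z2') \<in> Hdom g"
  shows "z2 powi b2 * Hav b1 b2 h (z1, z2) = z2' powi b2 * Hav b1 b2 h (z1, z2')"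
proof -
  have inner: "z2 powi b2 * integral {0..1} (\<lambda>t. h (z1 * ee s, z2 * ee t) * ee t powi b2)
      = z2' powi b2 * integral {0..1} (\<lambda>t. h (z1 * ee s, z2' * ee t) * ee t powi b2)" for s
  proof (rule circle_avg_indep[where S="{\<omega>. (z1 * ee s, \<omega>) \<in> Hdom g}" and F="\<lambda>\<omega>. h (z1 * ee s, \<omega>)"])
    show "open {\<omega>. (z1 * ee s, \<omega>) \<in> Hdom g}"
    proof -
      have "{\<omega>. (z1 * ee s, \<omega>) \<in> Hdom g} = (\<lambda>\<omega>. (z1 * ee s, \<omega>)) -` Hdom g" by auto
      then show ?thesis using open_Hdom[OF g] by (auto intro!: continuous_open_vimage continuous_intros)
    qed
    show "(\<lambda>\<omega>. h (z1 * ee s, \<omega>)) holomorphic_on {\<omega>. (z1 * ee s, \<omega>) \<in> Hdom g}"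
      by (rule holo2_snd[OF h open_Hdom[OF g]])
    show "z2 \<noteq> 0" "z2' \<noteq> 0" using z z' by (auto simp: Hdom_def)
    fix \<zeta> assume "min (cmod z2) (cmod z2') \<le> cmod \<zeta>" "cmod \<zeta> \<le> max (cmod z2) (cmod z2')"
    then show "\<zeta> \<in> {\<omega>. (z1 * ee s, \<omega>) \<in> Hdom g}" using z z'
      by (auto simp: Hdom_def norm_mult min_def max_def split: if_splits)
  qed
  have "z2 powi b2 * Hav b1 b2 h (z1, z2) = integral {0..1} (\<lambda>s. ee s powi (-b1) *
      (z2 powi b2 * integral {0..1} (\<lambda>t. h (z1 * ee s, z2 * ee t) * ee t powi b2)))"
    unfolding Hav_def
    by (simp add: mult_ac flip: integral_mult_right integral_mult_left)
  also have "\<dots> = integral {0..1} (\<lambda>s. ee s powi (-b1) *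
      (z2' powi b2 * integral {0..1} (\<lambda>t. h (z1 * ee s, z2' * ee t) * ee t powi b2)))"
    by (simp only: inner)
  also have "\<dots> = z2' powi b2 * Hav b1 b2 h (z1, z2')"
    unfolding Hav_def
    by (simp add: mult_ac flip: integral_mult_right integral_mult_left)
  finally show ?thesis .
qed



lemma Hav_swap:
  assumes g: "0 < g" and h: "holo2 h (Hdom g)" and z: "z \<in> Hdom g"
  shows "Hav b1 b2 h z = integral {0..1} (\<lambda>t. integral {0..1} (\<lambda>s.
      h (fst z * ee s, snd z * ee t) * ee s powi (-b1) * ee t powi b2))"
proof -
  have hc: "continuous_on (Hdom g) h" by (rule holo2_cont[OF h open_Hdom[OF g]])
  have "continuous_on (cbox (0,0) (1,1)) (\<lambda>(s,t). h (fst z * ee s, snd z * ee t) * ee s powi (-b1) * ee t powi b2)"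
  proof -
    have c1: "continuous_on (cbox (0,0) (1,1)) (\<lambda>p::real\<times>real. h (fst z * ee (fst p), snd z * ee (snd p)))"
    proof (rule continuous_on_compose2[OF hc])
      show "continuous_on (cbox (0, 0) (1, 1)) (\<lambda>p::real\<times>real. (fst z * ee (fst p), snd z * ee (snd p)))"
        by (intro continuous_intros continuous_on_compose2[OF continuous_on_ee]) auto
      show "(\<lambda>p::real\<times>real. (fst z * ee (fst p), snd z * ee (snd p))) ` cbox (0, 0) (1, 1) \<subseteq> Hdom g"
        using z by (auto simp: Hdom_def norm_mult)
    qed
    have c2: "continuous_on (cbox (0,0) (1,1)) (\<lambda>p::real\<times>real. ee (fst p) powi (-b1) * ee (snd p) powi b2)"
      by (intro continuous_intros continuous_on_compose2[OF continuous_on_ee]) auto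
    show ?thesis using continuous_on_mult[OF c1 c2] by (simp add: case_prod_beta' mult.assoc)
  qed
  from integral_swap_continuous[OF this] show ?thesis
    unfolding Hav_def by (simp add: cbox_interval)
qed

lemma Hav_z1:
  assumes g: "0 < g" and h: "holo2 h (Hdom g)"
    and z: "(z1, z2) \<in> Hdom g" and z': "(z1', z2) \<in> Hdom g" and nz: "z1 \<noteq> 0" "z1' \<noteq> 0"
  shows "z1 powi (-b1) * Hav b1 b2 h (z1, z2) = z1' powi (-b1) * Hav b1 b2 h (z1', z2)"
proof -
  have inner: "z1 powi (-b1) * integral {0..1} (\<lambda>s. h (z1 * ee s, z2 * ee t) * ee s powi (-b1))
      = z1' powi (-b1) * integral {0..1} (\<lambda>s. h (z1' * ee s, z2 * ee t) * ee s powi (-b1))" for t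
  proof (rule circle_avg_indep[where S="{\<zeta>. (\<zeta>, z2 * ee t) \<in> Hdom g}" and F="\<lambda>\<zeta>. h (\<zeta>, z2 * ee t)"])
    show "open {\<zeta>. (\<zeta>, z2 * ee t) \<in> Hdom g}"
    proof -
      have "{\<zeta>. (\<zeta>, z2 * ee t) \<in> Hdom g} = (\<lambda>\<zeta>. (\<zeta>, z2 * ee t)) -` Hdom g" by auto
      then show ?thesis using open_Hdom[OF g] by (auto intro!: continuous_open_vimage continuous_intros)
    qed
    show "(\<lambda>\<zeta>. h (\<zeta>, z2 * ee t)) holomorphic_on {\<zeta>. (\<zeta>, z2 * ee t) \<in> Hdom g}"
      by (rule holo2_fst[OF h open_Hdom[OF g]])
    show "z1 \<noteq> 0" "z1' \<noteq> 0" using nz by auto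
    fix \<zeta> assume a: "min (cmod z1) (cmod z1') \<le> cmod \<zeta>" "cmod \<zeta> \<le> max (cmod z1) (cmod z1')"
    have "cmod \<zeta> powr g \<le> max (cmod z1) (cmod z1') powr g"
      using a g by (intro powr_mono2) auto
    moreover have "max (cmod z1) (cmod z1') powr g < cmod z2" using z z' by (auto simp: Hdom_def max_def)
    ultimately show "\<zeta> \<in> {\<zeta>. (\<zeta>, z2 * ee t) \<in> Hdom g}" using z
      by (auto simp: Hdom_def norm_mult)
  qed
  have "z1 powi (-b1) * Hav b1 b2 h (z1, z2) = integral {0..1} (\<lambda>t. ee t powi b2 *
      (z1 powi (-b1) * integral {0..1} (\<lambda>s. h (z1 * ee s, z2 * ee t) * ee s powi (-b1))))"
    using Hav_swap[OF g h z]
    by (simp add: mult_ac flip: integral_mult_right integral_mult_left)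
  also have "\<dots> = integral {0..1} (\<lambda>t. ee t powi b2 *
      (z1' powi (-b1) * integral {0..1} (\<lambda>s. h (z1' * ee s, z2 * ee t) * ee s powi (-b1))))"
    by (simp only: inner)
  also have "\<dots> = z1' powi (-b1) * Hav b1 b2 h (z1', z2)"
    using Hav_swap[OF g h z']
    by (simp add: mult_ac flip: integral_mult_right integral_mult_left)
  finally show ?thesis .
qed

lemma Hav_const:
  assumes g: "0 < g" and h: "holo2 h (Hdom g)"
    and z: "z \<in> Hdom g" and z': "z' \<in> Hdom g" and nz: "fst z \<noteq> 0" "fst z' \<noteq> 0"
  shows "fst z powi (-b1) * snd z powi b2 * Hav b1 b2 h z = fst z' powi (-b1) * snd z' powi b2 * Hav b1 b2 h z'"
proof -
  obtain z1 z2 z1' z2' where zz: "z = (z1, z2)" "z' = (z1', z2')" by (cases z, cases z') auto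
  define w where "w = (if cmod z2' \<le> cmod z2 then z2 else z2')"
  have w1: "(z1, w) \<in> Hdom g" "(z1', w) \<in> Hdom g" using z z' zz
    by (auto simp: w_def Hdom_def)
  have "z1 powi (-b1) * z2 powi b2 * Hav b1 b2 h (z1, z2) = z1 powi (-b1) * (w powi b2 * Hav b1 b2 h (z1, w))"
    using Hav_z2[OF g h, of z1 z2 w b2 b1] z zz w1 by (simp add: mult.assoc)
  also have "\<dots> = w powi b2 * (z1 powi (-b1) * Hav b1 b2 h (z1, w))" by (simp add: mult_ac)
  also have "\<dots> = w powi b2 * (z1' powi (-b1) * Hav b1 b2 h (z1', w))"
    using Hav_z1[OF g h w1] nz zz by simp
  also have "\<dots> = z1' powi (-b1) * (w powi b2 * Hav b1 b2 h (z1', w))" by (simp add: mult_ac)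
  also have "\<dots> = z1' powi (-b1) * (z2' powi b2 * Hav b1 b2 h (z1', z2'))"
    using Hav_z2[OF g h w1(2), of z2' b2 b1] z' zz by simp
  finally show ?thesis using zz by (simp add: mult.assoc)
qed



abbreviation Rp :: "real \<times> real \<Rightarrow> complex \<times> complex \<Rightarrow> complex \<times> complex" where
  "Rp p \<equiv> rot2 (ee (fst p)) (ee (snd p))"

lemma borel_measurable_cnj:
  "f \<in> borel_measurable M \<Longrightarrow> (\<lambda>x. cnj (f x :: complex)) \<in> borel_measurable M"
  using borel_measurable_continuous_onI[OF continuous_on_cnj[OF continuous_on_id]]
  by (rule measurable_compose[rotated])

lemma L2_prod_integrable:
  fixes a b :: "'x \<Rightarrow> complex"
  assumes [measurable]: "a \<in> borel_measurable M" "b \<in> borel_measurable M"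
    and ia: "integrable M (\<lambda>z. (cmod (a z))\<^sup>2)" and ib: "integrable M (\<lambda>z. (cmod (b z))\<^sup>2)"
  shows "integrable M (\<lambda>z. a z * cnj (b z))"
proof (rule Bochner_Integration.integrable_bound[OF Bochner_Integration.integrable_add[OF ia ib]])
  show "(\<lambda>z. a z * cnj (b z)) \<in> borel_measurable M"
    using borel_measurable_cnj[of b M] by measurable
  show "AE z in M. norm (a z * cnj (b z)) \<le> norm ((cmod (a z))\<^sup>2 + (cmod (b z))\<^sup>2)"
  proof (rule AE_I2)
    fix z
    have "cmod (a z) * cmod (b z) \<le> (cmod (a z))\<^sup>2 + (cmod (b z))\<^sup>2"
      using sum_squares_bound[of "cmod (a z)" "cmod (b z)"] mult_nonneg_nonneg[OF norm_ge_zero norm_ge_zero, of "a z" "b z"]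
      by linarith
    then show "norm (a z * cnj (b z)) \<le> norm ((cmod (a z))\<^sup>2 + (cmod (b z))\<^sup>2)"
      by (simp add: norm_mult)
  qed
qed

lemma L2_prod_nn_finite:
  fixes a b :: "'x \<Rightarrow> complex"
  assumes [measurable]: "a \<in> borel_measurable M" "b \<in> borel_measurable M"
    and ia: "integrable M (\<lambda>z. (cmod (a z))\<^sup>2)" and ib: "integrable M (\<lambda>z. (cmod (b z))\<^sup>2)"
  shows "(\<integral>\<^sup>+z. ennreal (cmod (a z) * cmod (b z)) \<partial>M) < \<infinity>"
proof -
  have "integrable M (\<lambda>z. a z * cnj (b z))" by (rule L2_prod_integrable) (use assms in auto)
  then have "(\<integral>\<^sup>+z. ennreal (norm (a z * cnj (b z))) \<partial>M) < \<infinity>"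
    by (simp add: integrable_iff_bounded)
  then show ?thesis by (simp add: norm_mult)
qed

lemma cnj_ee_powi: "cnj (ee s powi n) = ee s powi (-n)"
  by (simp add: cnj_ee power_int_inverse[symmetric] power_int_minus)

lemma cnj_ee_powi': "cnj (ee s) powi n = ee s powi (-n)"
  by (simp add: cnj_ee power_int_inverse[symmetric] power_int_minus)

lemma norm_ee_powi [simp]: "cmod (ee s powi n) = 1"
  by (simp add: norm_power_int)

lemma Rp_meas: "(\<lambda>x::(real\<times>real)\<times>(complex\<times>complex). Rp (fst x) (snd x)) \<in> borel_measurable borel"
  unfolding rot2_def
  by (intro borel_measurable_continuous_onI continuous_intros continuous_on_compose2[OF continuous_on_ee]) auto



lemma avg_lemma:
  fixes u h :: "complex\<times>complex \<Rightarrow> complex" and b1 b2 :: int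
  assumes um[measurable]: "u \<in> borel_measurable borel" and hm[measurable]: "h \<in> borel_measurable borel"
    and ui: "integrable lborel (\<lambda>z. (cmod (u z))\<^sup>2)" and hi: "integrable lborel (\<lambda>z. (cmod (h z))\<^sup>2)"
    and eqv: "\<And>p z. u (Rp p z) = ee (fst p) powi b1 * ee (snd p) powi (-b2) * u z"
  shows "(\<integral>z. u z * cnj (h z) \<partial>lborel) = (\<integral>z. u z * cnj (\<integral>p. indicator (cbox (0,0) (1,1)) p *\<^sub>R
      (h (Rp p z) * ee (fst p) powi (-b1) * ee (snd p) powi b2) \<partial>lborel) \<partial>lborel)"
proof -
  define Q :: "(real\<times>real) set" where "Q = cbox (0,0) (1,1)"
  define k where "k p z = h (Rp p z) * ee (fst p) powi (-b1) * ee (snd p) powi b2" for p z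
  define C where "C = (\<integral>z. u z * cnj (h z) \<partial>lborel)"
  have cnjm: "(\<lambda>z. cnj (h z)) \<in> borel_measurable borel" by (rule borel_measurable_cnj) simp
  have nu: "cmod (u (Rp p z)) = cmod (u z)" for p z by (simp add: eqv norm_mult)
  have step1: "C = (\<integral>z. u z * cnj (k p z) \<partial>lborel)" for p
  proof -
    have "C = (\<integral>z. (\<lambda>z. u z * cnj (h z)) (Rp p z) \<partial>lborel)"
      unfolding C_def by (rule integral_rot2[symmetric]) (use cnjm in auto)
    also have "\<dots> = (\<integral>z. u z * cnj (k p z) \<partial>lborel)"
      by (rule Bochner_Integration.integral_cong) (auto simp: k_def eqv cnj_ee_powi' mult_ac)
    finally show ?thesis .
  qed
  have nnfin: "(\<integral>\<^sup>+z. ennreal (cmod (u z) * cmod (h z)) \<partial>lborel) < \<infinity>"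
    by (rule L2_prod_nn_finite) (use ui hi in auto)
  have rotnn: "(\<integral>\<^sup>+z. ennreal (cmod (u z) * cmod (h (Rp p z))) \<partial>lborel) = (\<integral>\<^sup>+z. ennreal (cmod (u z) * cmod (h z)) \<partial>lborel)" for p
  proof -
    have "(\<integral>\<^sup>+z. ennreal (cmod (u z) * cmod (h z)) \<partial>lborel) = (\<integral>\<^sup>+z. (\<lambda>z. ennreal (cmod (u z) * cmod (h z))) (Rp p z) \<partial>lborel)"
      by (rule nn_integral_rot2[symmetric]) auto
    then show ?thesis by (simp add: nu)
  qed
  have kmeas: "(\<lambda>z. k p z) \<in> borel_measurable borel" for p
    unfolding k_def by measurable
  have normk: "cmod (u z * cnj (k p z)) = cmod (u z) * cmod (h (Rp p z))" for p z
    by (simp add: k_def norm_mult cnj_ee_powi')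
  have int_z: "integrable lborel (\<lambda>z. u z * cnj (k p z))" for p
  proof -
    have "(\<lambda>z. u z * cnj (k p z)) \<in> borel_measurable borel"
      using borel_measurable_cnj[OF kmeas[of p]] by measurable
    then show ?thesis
      using nnfin by (simp add: integrable_iff_bounded normk rotnn)
  qed
  define B where "B = (\<integral>z. cmod (u z) * cmod (h z) \<partial>lborel)"
  have normint: "(\<integral>z. cmod (u z * cnj (k p z)) \<partial>lborel) = B" for p
  proof -
    have "B = (\<integral>z. (\<lambda>z. cmod (u z) * cmod (h z)) (Rp p z) \<partial>lborel)"
      unfolding B_def by (rule integral_rot2[symmetric]) auto
    then show ?thesis by (simp add: normk nu)
  qed
  define G where "G x = indicator Q (fst x) *\<^sub>R (u (snd x) * cnj (k (fst x) (snd x)))" for x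
  have Rpm[measurable]: "(\<lambda>x::(real\<times>real)\<times>(complex\<times>complex). h (Rp (fst x) (snd x))) \<in> borel_measurable borel"
    using measurable_compose[OF Rp_meas hm] by simp
  have eem[measurable]: "(\<lambda>x::(real\<times>real)\<times>(complex\<times>complex). ee (fst (fst x)) powi n) \<in> borel_measurable borel" for n
    by (intro borel_measurable_continuous_onI continuous_intros continuous_on_compose2[OF continuous_on_ee]) auto
  have eem2[measurable]: "(\<lambda>x::(real\<times>real)\<times>(complex\<times>complex). ee (snd (fst x)) powi n) \<in> borel_measurable borel" for n
    by (intro borel_measurable_continuous_onI continuous_intros continuous_on_compose2[OF continuous_on_ee]) auto
  have Qm[measurable]: "Q \<in> sets borel" unfolding Q_def by simp
  have Gm: "G \<in> borel_measurable (lborel \<Otimes>\<^sub>M lborel)"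
  proof -
    have "(\<lambda>x::(real\<times>real)\<times>(complex\<times>complex). cnj (k (fst x) (snd x))) \<in> borel_measurable borel"
      by (rule borel_measurable_cnj) (unfold k_def, measurable)
    moreover have "(\<lambda>x::(real\<times>real)\<times>(complex\<times>complex). u (snd x)) \<in> borel_measurable borel"
      by (rule measurable_compose[OF _ um]) (intro borel_measurable_continuous_onI continuous_intros)
    moreover have "(\<lambda>x::(real\<times>real)\<times>(complex\<times>complex). indicator Q (fst x) :: real) \<in> borel_measurable borel"
      by (rule measurable_compose[of fst _ borel]) (auto intro!: borel_measurable_continuous_onI continuous_on_fst continuous_on_id)
    ultimately have "G \<in> borel_measurable borel" unfolding G_def
      by (intro borel_measurable_scaleR borel_measurable_times)
    then show ?thesis by (simp add: lborel_prod)
  qed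
  have Qfin: "emeasure lborel Q < \<infinity>" unfolding Q_def by (rule emeasure_lborel_cbox_finite)
  have intG: "integrable (lborel \<Otimes>\<^sub>M lborel) G"
  proof (rule lborel_pair.Fubini_integrable[OF Gm])
    have "(\<lambda>p. \<integral>z. norm (G (p, z)) \<partial>lborel) = (\<lambda>p. indicator Q p * B)"
      by (auto simp: G_def normint split: split_indicator)
    moreover have "integrable lborel (\<lambda>p. indicator Q p * B)"
      using Qfin by (intro integrable_mult_left) auto
    ultimately show "integrable lborel (\<lambda>p. \<integral>z. norm (G (p, z)) \<partial>lborel)" by simp
    show "AE p in lborel. integrable lborel (\<lambda>z. G (p, z))"
      by (rule AE_I2) (auto simp: G_def int_z)
  qed
  have "(\<integral>z. \<integral>p. G (p, z) \<partial>lborel \<partial>lborel) = (\<integral>p. \<integral>z. G (p, z) \<partial>lborel \<partial>lborel)"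
  proof -
    have "integrable (lborel \<Otimes>\<^sub>M lborel) (\<lambda>(x,y). G (x,y))" using intG by simp
    from lborel_pair.Fubini_integral[OF this] show ?thesis .
  qed
  also have "\<dots> = (\<integral>p. indicator Q p *\<^sub>R C \<partial>lborel)"
    by (rule Bochner_Integration.integral_cong) (auto simp: G_def step1[symmetric])
  also have "\<dots> = C"
  proof -
    have "measure lborel Q = 1" unfolding Q_def by (simp add: measure_lborel_cbox_eq Basis_prod_def)
    then show ?thesis using Qfin by simp
  qed
  finally have eq: "(\<integral>z. \<integral>p. G (p, z) \<partial>lborel \<partial>lborel) = C" .
  have "(\<integral>p. G (p, z) \<partial>lborel) = u z * cnj (\<integral>p. indicator Q p *\<^sub>R k p z \<partial>lborel)" for z
  proof -
    have "(\<integral>p. G (p, z) \<partial>lborel) = (\<integral>p. u z * cnj (indicator Q p *\<^sub>R k p z) \<partial>lborel)"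
      by (rule Bochner_Integration.integral_cong) (auto simp: G_def split: split_indicator)
    also have "\<dots> = u z * cnj (\<integral>p. indicator Q p *\<^sub>R k p z \<partial>lborel)"
      by (simp only: integral_mult_right_zero Bochner_Integration.integral_cnj)
    finally show ?thesis .
  qed
  with eq show ?thesis unfolding C_def Q_def k_def by simp
qed



lemma cont_k:
  assumes g: "0 < g" and h: "holo2 h (Hdom g)" and z: "z \<in> Hdom g"
  shows "continuous_on (cbox (0,0) (1,1)) (\<lambda>p::real\<times>real. h (fst z * ee (fst p), snd z * ee (snd p)) * ee (fst p) powi (-b1) * ee (snd p) powi b2)"
proof -
  have hc: "continuous_on (Hdom g) h" by (rule holo2_cont[OF h open_Hdom[OF g]])
  have c1: "continuous_on (cbox (0,0) (1,1)) (\<lambda>p::real\<times>real. h (fst z * ee (fst p), snd z * ee (snd p)))"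
  proof (rule continuous_on_compose2[OF hc])
    show "continuous_on (cbox (0, 0) (1, 1)) (\<lambda>p::real\<times>real. (fst z * ee (fst p), snd z * ee (snd p)))"
      by (intro continuous_intros continuous_on_compose2[OF continuous_on_ee]) auto
    show "(\<lambda>p::real\<times>real. (fst z * ee (fst p), snd z * ee (snd p))) ` cbox (0, 0) (1, 1) \<subseteq> Hdom g"
      using z by (auto simp: Hdom_def norm_mult)
  qed
  have c2: "continuous_on (cbox (0,0) (1,1)) (\<lambda>p::real\<times>real. ee (fst p) powi (-b1) * ee (snd p) powi b2)"
    by (intro continuous_intros continuous_on_compose2[OF continuous_on_ee]) auto
  show ?thesis using continuous_on_mult[OF c1 c2] by (simp add: mult.assoc)
qed

lemma Qint_Hav:
  assumes g: "0 < g" and h: "holo2 h (Hdom g)" and z: "z \<in> Hdom g"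
  shows "(\<integral>p. indicator (cbox (0,0) (1,1)) p *\<^sub>R (h (Rp p z) * ee (fst p) powi (-b1) * ee (snd p) powi b2) \<partial>lborel)
    = Hav b1 b2 h z"
proof -
  define k where "k p = h (fst z * ee (fst p), snd z * ee (snd p)) * ee (fst p) powi (-b1) * ee (snd p) powi b2" for p :: "real\<times>real"
  have kc: "continuous_on (cbox (0,0) (1,1)) k" unfolding k_def by (rule cont_k[OF g h z])
  have Rk: "h (Rp p z) * ee (fst p) powi (-b1) * ee (snd p) powi b2 = k p" for p
    by (simp add: k_def rot2_def mult.commute)
  have si: "set_integrable lborel (cbox (0,0) (1,1)) k"
    unfolding set_integrable_def by (rule borel_integrable_compact[OF compact_cbox kc])
  have "(\<integral>p. indicator (cbox (0,0) (1,1)) p *\<^sub>R k p \<partial>lborel) = integral (cbox (0,0) (1,1)) k"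
    using set_borel_integral_eq_integral(2)[OF si] by (simp add: set_lebesgue_integral_def)
  also have "\<dots> = integral (cbox 0 1) (\<lambda>s. integral (cbox 0 1) (\<lambda>t. k (s, t)))"
    by (rule integral_prod_continuous[OF kc])
  also have "\<dots> = Hav b1 b2 h z"
    by (simp add: Hav_def k_def cbox_interval)
  finally show ?thesis by (simp add: Rk)
qed

lemma holo2_mono:
  fixes C :: complex
  assumes b1: "0 \<le> b1" and S: "\<forall>z\<in>S. snd z \<noteq> 0"
  shows "holo2 (\<lambda>z. C * (fst z powi b1 * snd z powi b2)) S"
  unfolding holo2_def
proof
  fix z assume zS: "z \<in> S"
  define k where "k = nat b1"
  have eq: "(\<lambda>z. C * (fst z powi b1 * snd z powi b2)) = (\<lambda>z. C * (fst z ^ k * snd z powi b2))"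
    using b1 by (simp add: k_def power_int_def)
  let ?L = "\<lambda>d. C * ((fst d * (of_nat k * fst z ^ (k - 1))) * snd z powi b2
                 + fst z ^ k * (snd d * (of_int b2 * snd z powi (b2 - 1))))"
  have "((\<lambda>z. C * (fst z ^ k * snd z powi b2)) has_derivative ?L) (at z)"
    using S zS by (auto intro!: derivative_eq_intros simp: algebra_simps)
  moreover have "\<forall>c w. ?L (c * fst w, c * snd w) = c * ?L w"
    by (simp add: algebra_simps)
  ultimately show "\<exists>L. ((\<lambda>z. C * (fst z powi b1 * snd z powi b2)) has_derivative L) (at z) \<and>
      (\<forall>c w. L (c * fst w, c * snd w) = c * L w)"
    unfolding eq by blast
qed



lemma Qint_meas:
  fixes h :: "complex\<times>complex \<Rightarrow> complex"
  assumes hm: "h \<in> borel_measurable borel"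
  shows "(\<lambda>z. \<integral>p. indicator (cbox (0,0) (1,1)) p *\<^sub>R (h (Rp p z) * ee (fst p) powi (-b1) * ee (snd p) powi b2) \<partial>lborel)
     \<in> borel_measurable borel"
proof -
  define Q :: "(real\<times>real) set" where "Q = cbox (0,0) (1,1)"
  have c1: "(\<lambda>x::(complex\<times>complex)\<times>(real\<times>real). Rp (snd x) (fst x)) \<in> borel_measurable borel"
    unfolding rot2_def
    by (intro borel_measurable_continuous_onI continuous_intros continuous_on_compose2[OF continuous_on_ee]) auto
  have m1: "(\<lambda>x::(complex\<times>complex)\<times>(real\<times>real). h (Rp (snd x) (fst x))) \<in> borel_measurable borel"
    using measurable_compose[OF c1 hm] by simp
  have m2: "(\<lambda>x::(complex\<times>complex)\<times>(real\<times>real). ee (fst (snd x)) powi (-b1) * ee (snd (snd x)) powi b2) \<in> borel_measurable borel"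
    by (intro borel_measurable_continuous_onI continuous_intros continuous_on_compose2[OF continuous_on_ee]) auto
  have m3: "(\<lambda>x::(complex\<times>complex)\<times>(real\<times>real). indicator Q (snd x) :: real) \<in> borel_measurable borel"
    by (rule measurable_compose[of snd _ borel]) (auto intro!: borel_measurable_continuous_onI continuous_on_snd continuous_on_id simp: Q_def)
  have "(\<lambda>x::(complex\<times>complex)\<times>(real\<times>real). indicator Q (snd x) *\<^sub>R (h (Rp (snd x) (fst x)) * ee (fst (snd x)) powi (-b1) * ee (snd (snd x)) powi b2))
     \<in> borel_measurable borel"
    using borel_measurable_scaleR[OF m3 borel_measurable_times[OF m1 m2]] by (simp add: mult.assoc)
  then have "case_prod (\<lambda>z p. indicator Q p *\<^sub>R (h (Rp p z) * ee (fst p) powi (-b1) * ee (snd p) powi b2))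
      \<in> borel_measurable (lborel \<Otimes>\<^sub>M lborel)"
    by (simp add: lborel_prod case_prod_beta')
  from sigma_finite_measure.borel_measurable_lebesgue_integral[OF sigma_finite_lborel this]
  show ?thesis by (simp add: Q_def)
qed

lemma null_fst0: "{z::complex\<times>complex. fst z = 0} \<in> null_sets lborel"
proof -
  have "{z::complex\<times>complex. fst z = 0} = {0} \<times> UNIV" by auto
  moreover have "{0::complex} \<times> (UNIV::complex set) \<in> null_sets (lborel \<Otimes>\<^sub>M lborel)"
    by (rule sigma_finite_measure.times_in_null_sets1[OF sigma_finite_lborel]) auto
  ultimately show ?thesis by (simp add: lborel_prod)
qed

lemma Hav_eq_J:
  assumes g: "0 < g" and h: "holo2 h (Hdom g)"
  obtains J where "\<And>z. z \<in> Hdom g \<Longrightarrow> fst z \<noteq> 0 \<Longrightarrow> Hav b1 b2 h z = J * (fst z powi b1 * snd z powi (-b2))"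
proof (cases "\<exists>z0\<in>Hdom g. fst z0 \<noteq> 0")
  case False then show ?thesis using that by blast
next
  case True
  then obtain z0 where z0: "z0 \<in> Hdom g" "fst z0 \<noteq> 0" by blast
  define J where "J = fst z0 powi (-b1) * snd z0 powi b2 * Hav b1 b2 h z0"
  show ?thesis
  proof (rule that[of J])
    fix z assume z: "z \<in> Hdom g" "fst z \<noteq> 0"
    have nz: "snd z \<noteq> 0" using z by (auto simp: Hdom_def)
    have e: "fst z powi (-b1) * snd z powi b2 * Hav b1 b2 h z = J"
      unfolding J_def by (rule Hav_const[OF g h z(1) z0(1) z(2) z0(2)])
    have "J * (fst z powi b1 * snd z powi (-b2)) = (fst z powi (-b1) * fst z powi b1) * (snd z powi b2 * snd z powi (-b2)) * Hav b1 b2 h z"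
      by (simp add: e[symmetric] mult_ac)
    also have "\<dots> = Hav b1 b2 h z"
      using z(2) nz by (simp add: power_int_minus field_simps)
    finally show "Hav b1 b2 h z = J * (fst z powi b1 * snd z powi (-b2))" by simp
  qed
qed



lemma powi_meas: "(\<lambda>x::complex. x powi n) \<in> borel_measurable borel"
  by (cases "0 \<le> n") (simp_all add: power_int_def)

lemma mono_meas: "(\<lambda>z::complex\<times>complex. fst z powi b1 * snd z powi b2) \<in> borel_measurable borel"
proof -
  have f: "fst \<in> borel_measurable (borel :: (complex\<times>complex) measure)"
    by (intro borel_measurable_continuous_onI continuous_on_fst continuous_on_id)
  have s: "snd \<in> borel_measurable (borel :: (complex\<times>complex) measure)"
    by (intro borel_measurable_continuous_onI continuous_on_snd continuous_on_id)
  show ?thesis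
    using borel_measurable_times[OF measurable_compose[OF f powi_meas] measurable_compose[OF s powi_meas]]
    by simp
qed

lemma inner_formula:
  fixes u h :: "complex\<times>complex \<Rightarrow> complex"
  assumes g: "0 < g" and h: "holo2 h (Hdom g)" and hm: "h \<in> borel_measurable borel"
    and hi: "integrable lborel (\<lambda>z. (cmod (h z))\<^sup>2)"
    and J: "\<And>z. z \<in> Hdom g \<Longrightarrow> fst z \<noteq> 0 \<Longrightarrow> Hav b1 b2 h z = J * (fst z powi b1 * snd z powi (-b2))"
    and um: "u \<in> borel_measurable borel" and ui: "integrable lborel (\<lambda>z. (cmod (u z))\<^sup>2)"
    and eqv: "\<And>p z. u (Rp p z) = ee (fst p) powi b1 * ee (snd p) powi (-b2) * u z"
    and u0: "\<And>z. z \<notin> Hdom g \<Longrightarrow> u z = 0"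
  shows "(\<integral>z. u z * cnj (h z) \<partial>lborel) = cnj J * (\<integral>z. u z * cnj (fst z powi b1 * snd z powi (-b2)) \<partial>lborel)"
proof -
  define q where "q z = (\<integral>p. indicator (cbox (0,0) (1,1)) p *\<^sub>R (h (Rp p z) * ee (fst p) powi (-b1) * ee (snd p) powi b2) \<partial>lborel)" for z
  have "(\<integral>z. u z * cnj (h z) \<partial>lborel) = (\<integral>z. u z * cnj (q z) \<partial>lborel)"
    unfolding q_def by (rule avg_lemma[OF um hm ui hi eqv])
  also have "\<dots> = (\<integral>z. cnj J * (u z * cnj (fst z powi b1 * snd z powi (-b2))) \<partial>lborel)"
  proof (rule integral_cong_AE)
    have qm: "q \<in> borel_measurable borel" unfolding q_def by (rule Qint_meas[OF hm])
    show "(\<lambda>z. u z * cnj (q z)) \<in> borel_measurable lborel"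
      using borel_measurable_cnj[OF qm] um by simp
    show "(\<lambda>z. cnj J * (u z * cnj (fst z powi b1 * snd z powi (-b2)))) \<in> borel_measurable lborel"
      using borel_measurable_cnj[OF mono_meas[of b1 "-b2"]] um by simp
    show "AE z in lborel. u z * cnj (q z) = cnj J * (u z * cnj (fst z powi b1 * snd z powi (-b2)))"
    proof (rule AE_I'[OF null_fst0])
      show "{z \<in> space lborel. \<not> (u z * cnj (q z) = cnj J * (u z * cnj (fst z powi b1 * snd z powi (-b2))))}
          \<subseteq> {z. fst z = 0}"
      proof clarify
        fix z assume ne: "\<not> (u z * cnj (q z) = cnj J * (u z * cnj (fst z powi b1 * snd z powi (-b2))))"
        show "fst z = 0"
        proof (rule ccontr)
          assume f: "fst z \<noteq> 0"
          show False
          proof (cases "z \<in> Hdom g")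
            case True
            have "q z = Hav b1 b2 h z" unfolding q_def by (rule Qint_Hav[OF g h True])
            also have "\<dots> = J * (fst z powi b1 * snd z powi (-b2))" by (rule J[OF True f])
            finally show False using ne by (simp add: mult_ac)
          next
            case False then show False using ne u0 by simp
          qed
        qed
      qed
    qed
  qed
  also have "\<dots> = cnj J * (\<integral>z. u z * cnj (fst z powi b1 * snd z powi (-b2)) \<partial>lborel)"
    by (rule integral_mult_right_zero)
  finally show ?thesis .
qed



lemma L2_diff:
  fixes a b :: "'x \<Rightarrow> complex"
  assumes am: "a \<in> borel_measurable M" and bm: "b \<in> borel_measurable M"
    and ia: "integrable M (\<lambda>z. (cmod (a z))\<^sup>2)" and ib: "integrable M (\<lambda>z. (cmod (b z))\<^sup>2)"
  shows "integrable M (\<lambda>z. (cmod (a z - b z))\<^sup>2)"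
proof (rule Bochner_Integration.integrable_bound[OF Bochner_Integration.integrable_add[OF
      integrable_mult_right[OF ia] integrable_mult_right[OF ib]]])
  show "(\<lambda>z. (cmod (a z - b z))\<^sup>2) \<in> borel_measurable M" using am bm by measurable
  show "AE z in M. norm ((cmod (a z - b z))\<^sup>2) \<le> norm (2 * (cmod (a z))\<^sup>2 + 2 * (cmod (b z))\<^sup>2)"
  proof (rule AE_I2)
    fix z
    have t: "cmod (a z - b z) \<le> cmod (a z) + cmod (b z)" by (rule norm_triangle_ineq4)
    have "(cmod (a z - b z))\<^sup>2 \<le> (cmod (a z) + cmod (b z))\<^sup>2"
      using t by (intro power_mono) auto
    also have "\<dots> \<le> 2 * (cmod (a z))\<^sup>2 + 2 * (cmod (b z))\<^sup>2"
      using sum_squares_bound[of "cmod (a z)" "cmod (b z)"] by (simp add: power2_sum)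
    finally show "norm ((cmod (a z - b z))\<^sup>2) \<le> norm (2 * (cmod (a z))\<^sup>2 + 2 * (cmod (b z))\<^sup>2)"
      by simp
  qed
qed

lemma bergman_facts:
  assumes "h \<in> bergman_space g"
  shows "holo2 h (Hdom g)" "h \<in> borel_measurable borel" "integrable lborel (\<lambda>z. (cmod (h z))\<^sup>2)"
    "\<And>z. z \<notin> Hdom g \<Longrightarrow> h z = 0"
proof -
  have h: "holo2 h (Hdom g)" "sq_int h (Hdom g)" "\<And>z. z \<notin> Hdom g \<Longrightarrow> h z = 0"
    using assms by (auto simp: bergman_space_def)
  show "holo2 h (Hdom g)" "\<And>z. z \<notin> Hdom g \<Longrightarrow> h z = 0" using h by auto
  have eq: "(\<lambda>z. indicator (Hdom g) z *\<^sub>R h z) = h"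
    using h(3) by (auto simp: fun_eq_iff split: split_indicator)
  show "h \<in> borel_measurable borel"
    using h(2) eq unfolding sq_int_def set_borel_measurable_def by simp
  have eq2: "(\<lambda>z. indicator (Hdom g) z *\<^sub>R (cmod (h z))\<^sup>2) = (\<lambda>z. (cmod (h z))\<^sup>2)"
    using h(3) by (auto simp: fun_eq_iff split: split_indicator)
  show "integrable lborel (\<lambda>z. (cmod (h z))\<^sup>2)"
    using h(2) eq2 unfolding sq_int_def set_integrable_def by simp
qed

lemma l2_inner_alt:
  assumes "\<And>z. z \<in> Hdom g \<Longrightarrow> H z = H' z" "\<And>z. z \<notin> Hdom g \<Longrightarrow> H' z = 0"
  shows "l2_inner g H h = (\<integral>z. H' z * cnj (h z) \<partial>lborel)"
  unfolding l2_inner_def set_lebesgue_integral_def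
  by (rule Bochner_Integration.integral_cong) (auto simp: assms split: split_indicator)

lemma AE_zero_cont:
  fixes d :: "complex\<times>complex \<Rightarrow> complex"
  assumes S: "open S" and dc: "continuous_on S d" and ae: "AE z in lborel. d z = 0" and z: "z \<in> S"
  shows "d z = 0"
proof (rule ccontr)
  assume nz: "d z \<noteq> 0"
  define T where "T = d -` (- {0}) \<inter> S"
  have oT: "open T" using continuous_on_open_vimage[OF S, of d] dc open_Compl[OF closed_singleton[of 0]] unfolding T_def by blast
  have "AE x \<in> T in lebesgue. x \<in> {}"
    using AE_completion[OF ae] by eventually_elim (auto simp: T_def)
  have "z \<in> T" using z nz by (simp add: T_def)
  from mem_closed_if_AE_lebesgue_open[OF oT closed_empty \<open>AE x \<in> T in lebesgue. x \<in> {}\<close> this] show False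
    by simp
qed

lemma sq_int_zero_ae:
  fixes d :: "'x \<Rightarrow> complex"
  assumes di: "integrable M (\<lambda>z. (cmod (d z))\<^sup>2)" and "(\<integral>z. (cmod (d z))\<^sup>2 \<partial>M) = 0"
  shows "AE z in M. d z = 0"
proof -
  have "AE z in M. (cmod (d z))\<^sup>2 = 0"
    using integral_nonneg_eq_0_iff_AE[OF di] assms(2) by simp
  then show ?thesis by eventually_elim simp
qed

lemma cnj_self: "z * cnj z = complex_of_real ((cmod z)\<^sup>2)"
  by (simp add: complex_mult_cnj cmod_def)



theorem proposition4p1:
  fixes \<gamma> :: real and \<beta>1 \<beta>2 :: int
  assumes "\<gamma> > 0"
    and "(\<beta>1, \<beta>2) \<in> A2 \<gamma>" and "(\<beta>1, - \<beta>2) \<in> A2 \<gamma>"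
  shows "\<exists>C::complex. \<forall>z\<in>Hdom \<gamma>.
           bergman_proj \<gamma> (\<lambda>z. fst z powi \<beta>1 * cnj (snd z) powi \<beta>2) z
             = C * fst z powi \<beta>1 * snd z powi (- \<beta>2)"
proof -
  note g = assms(1)
  define D where "D = Hdom \<gamma>"
  define f where "f = (\<lambda>z::complex\<times>complex. fst z powi \<beta>1 * cnj (snd z) powi \<beta>2)"
  define f1 where "f1 = (\<lambda>z::complex\<times>complex. fst z powi \<beta>1 * snd z powi \<beta>2)"
  define m where "m = (\<lambda>z::complex\<times>complex. fst z powi \<beta>1 * snd z powi (-\<beta>2))"
  have b1: "0 \<le> \<beta>1" and sqf1: "sq_int f1 D" and sqm: "sq_int m D"
    using assms(2,3) by (auto simp: A2_def D_def f1_def m_def)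
  have Dm[measurable]: "D \<in> sets borel" unfolding D_def by (rule Hdom_meas[OF g])
  have oD: "open D" unfolding D_def by (rule open_Hdom[OF g])
  have D2: "\<And>z. z \<in> D \<Longrightarrow> snd z \<noteq> 0" unfolding D_def by (rule Hdom_snd_nz)
  define u1 where "u1 z = indicator D z *\<^sub>R f z" for z
  define u2 where "u2 z = indicator D z *\<^sub>R m z" for z
  have fm: "f \<in> borel_measurable borel"
  proof -
    have fs: "fst \<in> borel_measurable (borel :: (complex\<times>complex) measure)"
      by (intro borel_measurable_continuous_onI continuous_on_fst continuous_on_id)
    have cs: "(\<lambda>z::complex\<times>complex. cnj (snd z)) \<in> borel_measurable borel"
      by (intro borel_measurable_continuous_onI continuous_intros)
    show ?thesis unfolding f_def
      using borel_measurable_times[OF measurable_compose[OF fs powi_meas] measurable_compose[OF cs powi_meas]]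
      by simp
  qed
  have u1m: "u1 \<in> borel_measurable borel" unfolding u1_def using fm by measurable
  have u2m: "u2 \<in> borel_measurable borel"
    using sqm unfolding sq_int_def set_borel_measurable_def u2_def by simp
  have u1i: "integrable lborel (\<lambda>z. (cmod (u1 z))\<^sup>2)"
  proof -
    have "(\<lambda>z. (cmod (u1 z))\<^sup>2) = (\<lambda>z. indicator D z *\<^sub>R (cmod (f1 z))\<^sup>2)"
      by (auto simp: fun_eq_iff u1_def f_def f1_def norm_mult norm_power_int split: split_indicator)
    then show ?thesis using sqf1 unfolding sq_int_def set_integrable_def by simp
  qed
  have u2i: "integrable lborel (\<lambda>z. (cmod (u2 z))\<^sup>2)"
  proof -
    have "(\<lambda>z. (cmod (u2 z))\<^sup>2) = (\<lambda>z. indicator D z *\<^sub>R (cmod (m z))\<^sup>2)"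
      by (auto simp: fun_eq_iff u2_def split: split_indicator)
    then show ?thesis using sqm unfolding sq_int_def set_integrable_def by simp
  qed
  have u1_0: "\<And>z. z \<notin> Hdom \<gamma> \<Longrightarrow> u1 z = 0" by (simp add: u1_def D_def)
  have u2_0: "\<And>z. z \<notin> Hdom \<gamma> \<Longrightarrow> u2 z = 0" by (simp add: u2_def D_def)
  have indR: "indicator D (Rp p z) = (indicator D z :: real)" for p z
    unfolding D_def by (simp add: indicator_def Hdom_rot2)
  have eqv1: "\<And>p z. u1 (Rp p z) = ee (fst p) powi \<beta>1 * ee (snd p) powi (-\<beta>2) * u1 z"
    unfolding u1_def indR by (simp add: f_def rot2_def power_int_mult_distrib cnj_ee_powi' mult_ac)
  have eqv2: "\<And>p z. u2 (Rp p z) = ee (fst p) powi \<beta>1 * ee (snd p) powi (-\<beta>2) * u2 z"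
    unfolding u2_def indR by (simp add: m_def rot2_def power_int_mult_distrib mult_ac)
  define A where "A = (\<integral>z. u1 z * cnj (u2 z) \<partial>lborel)"
  define B where "B = (\<integral>z. u2 z * cnj (u2 z) \<partial>lborel)"
  define C where "C = A / B"
  have ACB: "A - C * B = 0"
  proof (cases "B = 0")
    case False then show ?thesis by (simp add: C_def)
  next
    case True
    have "B = complex_of_real (\<integral>z. (cmod (u2 z))\<^sup>2 \<partial>lborel)"
      unfolding B_def cnj_self by (rule integral_complex_of_real)
    then have "(\<integral>z. (cmod (u2 z))\<^sup>2 \<partial>lborel) = 0" using True by simp
    from sq_int_zero_ae[OF u2i this] have "AE z in lborel. u2 z = 0" .
    then have "AE z in lborel. u1 z * cnj (u2 z) = 0" by eventually_elim simp
    then have "A = 0" unfolding A_def by (rule integral_eq_zero_AE)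
    then show ?thesis using True by simp
  qed
  define g0 where "g0 z = (if z \<in> D then C * m z else 0)" for z
  have g0u: "g0 z = C * u2 z" for z by (simp add: g0_def u2_def)
  have g0B: "g0 \<in> bergman_space \<gamma>"
    unfolding bergman_space_def
  proof (intro CollectI conjI allI impI)
    have hm: "holo2 (\<lambda>z. C * m z) D"
      unfolding m_def using holo2_mono[OF b1, of D C "-\<beta>2"] D2 by blast
    show "holo2 g0 (Hdom \<gamma>)"
      unfolding holo2_def
    proof
      fix z assume z: "z \<in> Hdom \<gamma>"
      obtain L where L: "((\<lambda>z. C * m z) has_derivative L) (at z)" "\<forall>c w. L (c * fst w, c * snd w) = c * L w"
        using hm z unfolding holo2_def D_def by blast
      have "(g0 has_derivative L) (at z)"
        by (rule has_derivative_transform_within_open[OF L(1) oD]) (use z in \<open>auto simp: D_def g0_def\<close>)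
      then show "\<exists>L. (g0 has_derivative L) (at z) \<and> (\<forall>c w. L (c * fst w, c * snd w) = c * L w)"
        using L(2) by blast
    qed
    show "sq_int g0 (Hdom \<gamma>)"
      unfolding sq_int_def set_borel_measurable_def set_integrable_def
    proof
      have "(\<lambda>z. indicator (Hdom \<gamma>) z *\<^sub>R g0 z) = (\<lambda>z. C * u2 z)"
        by (auto simp: fun_eq_iff g0u u2_def D_def split: split_indicator)
      then show "(\<lambda>z. indicator (Hdom \<gamma>) z *\<^sub>R g0 z) \<in> borel_measurable lborel" using u2m by simp
      have "(\<lambda>z. indicator (Hdom \<gamma>) z *\<^sub>R (cmod (g0 z))\<^sup>2) = (\<lambda>z. (cmod C)\<^sup>2 * (cmod (u2 z))\<^sup>2)"
        by (auto simp: fun_eq_iff g0u u2_def D_def norm_mult power_mult_distrib split: split_indicator)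
      then show "integrable lborel (\<lambda>z. indicator (Hdom \<gamma>) z *\<^sub>R (cmod (g0 z))\<^sup>2)" using u2i by simp
    qed
    fix z assume "z \<notin> Hdom \<gamma>" then show "g0 z = 0" by (simp add: g0_def D_def)
  qed
  have orth: "l2_inner \<gamma> (\<lambda>z. f z - g0 z) h = 0" if hB: "h \<in> bergman_space \<gamma>" for h
  proof -
    note hf = bergman_facts[OF hB]
    obtain J where J: "\<And>z. z \<in> Hdom \<gamma> \<Longrightarrow> fst z \<noteq> 0 \<Longrightarrow> Hav \<beta>1 \<beta>2 h z = J * (fst z powi \<beta>1 * snd z powi (-\<beta>2))"
      using Hav_eq_J[OF g hf(1)] by blast
    have I1: "(\<integral>z. u1 z * cnj (h z) \<partial>lborel) = cnj J * A"
    proof -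
      have "(\<integral>z. u1 z * cnj (h z) \<partial>lborel) = cnj J * (\<integral>z. u1 z * cnj (fst z powi \<beta>1 * snd z powi (-\<beta>2)) \<partial>lborel)"
        by (rule inner_formula[OF g hf(1) hf(2) hf(3) J u1m u1i eqv1 u1_0])
      also have "(\<integral>z. u1 z * cnj (fst z powi \<beta>1 * snd z powi (-\<beta>2)) \<partial>lborel) = A"
        unfolding A_def by (rule Bochner_Integration.integral_cong) (auto simp: u1_def u2_def m_def split: split_indicator)
      finally show ?thesis .
    qed
    have I2: "(\<integral>z. u2 z * cnj (h z) \<partial>lborel) = cnj J * B"
    proof -
      have "(\<integral>z. u2 z * cnj (h z) \<partial>lborel) = cnj J * (\<integral>z. u2 z * cnj (fst z powi \<beta>1 * snd z powi (-\<beta>2)) \<partial>lborel)"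
        by (rule inner_formula[OF g hf(1) hf(2) hf(3) J u2m u2i eqv2 u2_0])
      also have "(\<integral>z. u2 z * cnj (fst z powi \<beta>1 * snd z powi (-\<beta>2)) \<partial>lborel) = B"
        unfolding B_def by (rule Bochner_Integration.integral_cong) (auto simp: u2_def m_def split: split_indicator)
      finally show ?thesis .
    qed
    have int1: "integrable lborel (\<lambda>z. u1 z * cnj (h z))"
      by (rule L2_prod_integrable[OF _ _ u1i hf(3)]) (use u1m hf(2) in auto)
    have int2: "integrable lborel (\<lambda>z. C * (u2 z * cnj (h z)))"
      using L2_prod_integrable[OF _ _ u2i hf(3)] u2m hf(2) by simp
    have "l2_inner \<gamma> (\<lambda>z. f z - g0 z) h = (\<integral>z. (u1 z * cnj (h z) - C * (u2 z * cnj (h z))) \<partial>lborel)"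
    proof -
      have "l2_inner \<gamma> (\<lambda>z. f z - g0 z) h = (\<integral>z. (u1 z - g0 z) * cnj (h z) \<partial>lborel)"
        by (rule l2_inner_alt) (auto simp: u1_def g0_def D_def)
      also have "\<dots> = (\<integral>z. (u1 z * cnj (h z) - C * (u2 z * cnj (h z))) \<partial>lborel)"
        by (rule Bochner_Integration.integral_cong) (auto simp: g0u algebra_simps)
      finally show ?thesis .
    qed
    also have "\<dots> = (\<integral>z. u1 z * cnj (h z) \<partial>lborel) - C * (\<integral>z. u2 z * cnj (h z) \<partial>lborel)"
      using Bochner_Integration.integral_diff[OF int1 int2] by simp
    also have "\<dots> = cnj J * (A - C * B)" by (simp add: I1 I2 algebra_simps)
    also have "\<dots> = 0" by (simp add: ACB)
    finally show ?thesis .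
  qed
  have uniq: "g = g0" if gB: "g \<in> bergman_space \<gamma>"
    and go: "\<forall>h\<in>bergman_space \<gamma>. l2_inner \<gamma> (\<lambda>z. f z - g z) h = 0" for g
  proof -
    note gf = bergman_facts[OF gB] and g0f = bergman_facts[OF g0B]
    define d where "d z = g z - g0 z" for z
    have gl: "g \<in> borel_measurable lborel" "g0 \<in> borel_measurable lborel" "u1 \<in> borel_measurable lborel"
      using gf(2) g0f(2) u1m by simp_all
    have dm: "d \<in> borel_measurable borel" unfolding d_def using gf(2) g0f(2) by simp
    have dml: "d \<in> borel_measurable lborel" using dm by simp
    have di: "integrable lborel (\<lambda>z. (cmod (d z))\<^sup>2)"
      unfolding d_def by (rule L2_diff[OF gl(1) gl(2) gf(3) g0f(3)]) 
    have d0: "\<And>z. z \<notin> Hdom \<gamma> \<Longrightarrow> d z = 0" using gf(4) g0f(4) by (simp add: d_def)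
    have dB: "d \<in> bergman_space \<gamma>"
      unfolding bergman_space_def
    proof (intro CollectI conjI allI impI)
      show "holo2 d (Hdom \<gamma>)"
        unfolding holo2_def
      proof
        fix z assume z: "z \<in> Hdom \<gamma>"
        obtain L1 where L1: "(g has_derivative L1) (at z)" "\<forall>c w. L1 (c * fst w, c * snd w) = c * L1 w"
          using gf(1) z unfolding holo2_def by blast
        obtain L2 where L2: "(g0 has_derivative L2) (at z)" "\<forall>c w. L2 (c * fst w, c * snd w) = c * L2 w"
          using g0f(1) z unfolding holo2_def by blast
        have "(d has_derivative (\<lambda>w. L1 w - L2 w)) (at z)"
          unfolding d_def by (rule has_derivative_diff[OF L1(1) L2(1)])
        moreover have "\<forall>c w. L1 (c * fst w, c * snd w) - L2 (c * fst w, c * snd w) = c * (L1 w - L2 w)"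
          using L1(2) L2(2) by (simp add: algebra_simps)
        ultimately show "\<exists>L. (d has_derivative L) (at z) \<and> (\<forall>c w. L (c * fst w, c * snd w) = c * L w)"
          by blast
      qed
      show "sq_int d (Hdom \<gamma>)"
        unfolding sq_int_def set_borel_measurable_def set_integrable_def
      proof
        have "(\<lambda>z. indicator (Hdom \<gamma>) z *\<^sub>R d z) = d"
          using d0 by (auto simp: fun_eq_iff split: split_indicator)
        then show "(\<lambda>z. indicator (Hdom \<gamma>) z *\<^sub>R d z) \<in> borel_measurable lborel" using dm by simp
        have "(\<lambda>z. indicator (Hdom \<gamma>) z *\<^sub>R (cmod (d z))\<^sup>2) = (\<lambda>z. (cmod (d z))\<^sup>2)"
          using d0 by (auto simp: fun_eq_iff split: split_indicator)
        then show "integrable lborel (\<lambda>z. indicator (Hdom \<gamma>) z *\<^sub>R (cmod (d z))\<^sup>2)" using di by simp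
      qed
      fix z assume "z \<notin> Hdom \<gamma>" then show "d z = 0" by (rule d0)
    qed
    have e1: "l2_inner \<gamma> (\<lambda>z. f z - g z) d = (\<integral>z. (u1 z - g z) * cnj (d z) \<partial>lborel)"
      by (rule l2_inner_alt) (auto simp: u1_def D_def gf(4))
    have e2: "l2_inner \<gamma> (\<lambda>z. f z - g0 z) d = (\<integral>z. (u1 z - g0 z) * cnj (d z) \<partial>lborel)"
      by (rule l2_inner_alt) (auto simp: u1_def D_def g0f(4))
    have i1: "integrable lborel (\<lambda>z. (u1 z - g z) * cnj (d z))"
      by (rule L2_prod_integrable[OF _ dml L2_diff[OF gl(3) gl(1) u1i gf(3)] di]) (use gl in simp)
    have i2: "integrable lborel (\<lambda>z. (u1 z - g0 z) * cnj (d z))"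
      by (rule L2_prod_integrable[OF _ dml L2_diff[OF gl(3) gl(2) u1i g0f(3)] di]) (use gl in simp)
    have "(\<integral>z. (u1 z - g0 z) * cnj (d z) \<partial>lborel) - (\<integral>z. (u1 z - g z) * cnj (d z) \<partial>lborel) = 0"
      using go dB orth[OF dB] e1 e2 by simp
    then have "(\<integral>z. ((u1 z - g0 z) * cnj (d z) - (u1 z - g z) * cnj (d z)) \<partial>lborel) = 0"
      using Bochner_Integration.integral_diff[OF i2 i1] by simp
    moreover have "(\<lambda>z. (u1 z - g0 z) * cnj (d z) - (u1 z - g z) * cnj (d z)) = (\<lambda>z. complex_of_real ((cmod (d z))\<^sup>2))"
    proof
      fix z
      have "(u1 z - g0 z) * cnj (d z) - (u1 z - g z) * cnj (d z) = d z * cnj (d z)"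
        by (simp add: d_def algebra_simps)
      then show "(u1 z - g0 z) * cnj (d z) - (u1 z - g z) * cnj (d z) = complex_of_real ((cmod (d z))\<^sup>2)"
        by (simp only: cnj_self)
    qed
    ultimately have "complex_of_real (\<integral>z. (cmod (d z))\<^sup>2 \<partial>lborel) = 0"
      by (simp add: integral_complex_of_real[symmetric])
    then have "(\<integral>z. (cmod (d z))\<^sup>2 \<partial>lborel) = 0" by simp
    from sq_int_zero_ae[OF di this] have ae: "AE z in lborel. d z = 0" .
    have dc: "continuous_on (Hdom \<gamma>) d" by (rule holo2_cont[OF bergman_facts(1)[OF dB] open_Hdom[OF g]])
    have "d z = 0" for z
    proof (cases "z \<in> Hdom \<gamma>")
      case True then show ?thesis by (rule AE_zero_cont[OF open_Hdom[OF g] dc ae])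
    next
      case False then show ?thesis by (rule d0)
    qed
    then show "g = g0" by (auto simp: fun_eq_iff d_def)
  qed
  have proj: "bergman_proj \<gamma> (\<lambda>z. fst z powi \<beta>1 * cnj (snd z) powi \<beta>2) = g0"
    unfolding bergman_proj_def f_def[symmetric]
  proof (rule the_equality)
    show "g0 \<in> bergman_space \<gamma> \<and> (\<forall>h\<in>bergman_space \<gamma>. l2_inner \<gamma> (\<lambda>z. f z - g0 z) h = 0)"
      using g0B orth by blast
    fix g assume "g \<in> bergman_space \<gamma> \<and> (\<forall>h\<in>bergman_space \<gamma>. l2_inner \<gamma> (\<lambda>z. f z - g z) h = 0)"
    then show "g = g0" using uniq by blast
  qed
  show ?thesis
  proof (intro exI ballI)
    fix z assume "z \<in> Hdom \<gamma>"
    then show "bergman_proj \<gamma> (\<lambda>z. fst z powi \<beta>1 * cnj (snd z) powi \<beta>2) z = C * fst z powi \<beta>1 * snd z powi (- \<beta>2)"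
      by (simp add: proj g0_def D_def m_def mult.assoc)
  qed
qed

end
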